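(* Let $X\subseteq U$ be a fixed set of $|X|=m$ keys and let $h:U\to[n]$ be a random simple tabulation hash function. For all $t\ge0$, $$\Pr\bigl[|h(X)|\ge \mu_0+2t\bigr]=O\!\left(\exp\!\left(\frac{-t^2}{2m^{2-1/c}}\right)\right),$$ and $$\Pr\bigl[|h(X)|\le \mu_0-2t\bigr]=O\!\left(\exp\!\left(\frac{-t^2}{2m^{2-1/c}}\right)+\frac{m^2}{nt^2}\right).$$
   Context: Simple tabulation hashing: the key universe is $U=[u]$, each key $x\in U$ is viewed as a vector $(x[0],\dots,x[c-1])$ of $c=O(1)$ characters from $\Sigma=[u^{1/c}]$; the range is $[n]=[2^r]$. $h(x)=h_0(x[0])\oplus\cdots\oplus h_{c-1}(x[c-1])$ with $h_0,\dots,h_{c-1}:\Sigma\to[2^r]$ independent fully random functions and $\oplus$ bitwise XOR. $\mu_0=n(1-(1-1/n)^m)$. The constants in $O(\cdot)$ may depend on $c$ only. *)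

theory Defs
  imports Complex_Main "HOL-Library.FuncSet"
begin

text \<open>Simple tabulation hashing with c characters from the alphabet
  Sigma = {0..<s} and range [n] = {0..<2^r}.  A key is a vector of c characters,
  modelled as an extensional function {0..<c} -> Sigma.\<close>

definition keys :: "nat \<Rightarrow> nat \<Rightarrow> (nat \<Rightarrow> nat) set" where
  "keys c s = PiE {..<c} (\<lambda>_. {..<s})"

definition tab_space :: "nat \<Rightarrow> nat \<Rightarrow> nat \<Rightarrow> (nat \<Rightarrow> nat \<Rightarrow> nat) set" where
  "tab_space c s r = PiE {..<c} (\<lambda>_. PiE {..<s} (\<lambda>_. {..<2^r}))"

definition tab_hash :: "nat \<Rightarrow> (nat \<Rightarrow> nat \<Rightarrow> nat) \<Rightarrow> (nat \<Rightarrow> nat) \<Rightarrow> nat" where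
  "tab_hash c H x = foldr (\<lambda>i acc. xor (H i (x i)) acc) [0..<c] 0"

definition tab_prob :: "nat \<Rightarrow> nat \<Rightarrow> nat \<Rightarrow> ((nat \<Rightarrow> nat \<Rightarrow> nat) \<Rightarrow> bool) \<Rightarrow> real" where
  "tab_prob c s r P = real (card {H \<in> tab_space c s r. P H}) / real (card (tab_space c s r))"

definition mu0 :: "nat \<Rightarrow> nat \<Rightarrow> real" where
  "mu0 n m = real n * (1 - (1 - 1 / real n) ^ m)"

end

theory Submission
  imports Defs "HOL-Probability.Hoeffding"
begin

lemma hoeffding_pos:
  fixes A :: "'a set" and f :: "'a \<Rightarrow> real"
  assumes "finite A" "A \<noteq> {}" "\<And>x. x \<in> A \<Longrightarrow> a \<le> f x \<and> f x \<le> b" "l > 0"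
  shows "(\<Sum>x\<in>A. exp (l * (f x - sum f A / card A))) / card A \<le> exp (l^2 * (b - a)^2 / 8)"
proof -
  let ?M = "measure_pmf (pmf_of_set A)"
  have I: "interval_bounded_random_variable ?M f a b"
    unfolding interval_bounded_random_variable_def interval_bounded_random_variable_axioms_def
    using assms by (simp add: AE_measure_pmf_iff prob_space_measure_pmf)
  have E: "integral\<^sup>L ?M f = sum f A / card A"
    using integral_pmf_of_set[OF assms(2,1), of f] by simp
  have "nn_integral ?M (\<lambda>x. exp (l * (f x - integral\<^sup>L ?M f))) \<le> ennreal (exp (l\<^sup>2 * (b - a)\<^sup>2 / 8))"
    by (rule interval_bounded_random_variable.Hoeffdings_lemma_nn_integral[OF I]) (use assms in auto)
  also have "nn_integral ?M (\<lambda>x. exp (l * (f x - integral\<^sup>L ?M f))) =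
      (\<Sum>x\<in>A. ennreal (exp (l * (f x - sum f A / card A)))) / of_nat (card A)"
    unfolding E nn_integral_pmf_of_set[OF assms(2,1)] by simp
  also have "\<dots> = ennreal (\<Sum>x\<in>A. exp (l * (f x - sum f A / card A))) / ennreal (real (card A))"
    by (subst sum_ennreal) (auto simp: ennreal_of_nat_eq_real_of_nat)
  also have "\<dots> = ennreal ((\<Sum>x\<in>A. exp (l * (f x - sum f A / card A))) / card A)"
    by (rule divide_ennreal) (use assms in \<open>auto simp: sum_nonneg card_gt_0_iff\<close>)
  finally show ?thesis
    by (subst (asm) ennreal_le_iff) auto
qed

lemma hoeffding_fin:
  fixes A :: "'a set" and f :: "'a \<Rightarrow> real"
  assumes "finite A" "A \<noteq> {}" "\<And>x. x \<in> A \<Longrightarrow> a \<le> f x \<and> f x \<le> b"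
  shows "(\<Sum>x\<in>A. exp (l * (f x - sum f A / card A))) / card A \<le> exp (l^2 * (b - a)^2 / 8)"
proof (cases "l > 0")
  case True show ?thesis by (rule hoeffding_pos) (use assms True in auto)
next
  case False
  show ?thesis
  proof (cases "l = 0")
    case True thus ?thesis using assms by simp
  next
    case False
    hence l: "-l > 0" using \<open>\<not> l > 0\<close> by simp
    have "(\<Sum>x\<in>A. exp ((-l) * ((- f x) - sum (\<lambda>x. - f x) A / card A))) / card A \<le> exp ((-l)^2 * ((-a) - (-b))^2 / 8)"
      by (rule hoeffding_pos[OF assms(1,2) _ l]) (use assms(3) in force)
    moreover have "(-l) * ((- f x) - sum (\<lambda>x. - f x) A / card A) = l * (f x - sum f A / card A)" for x
      by (simp add: sum_negf algebra_simps)
    moreover have "((-a) - (-b))^2 = (b - a)^2" by (simp add: power2_commute)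
    ultimately show ?thesis by simp
  qed
qed

lemma xor_lt_pow: "(a::nat) < 2^r \<Longrightarrow> b < 2^r \<Longrightarrow> xor a b < 2^r"
  by (metis take_bit_nat_eq_self_iff take_bit_xor)

definition updH :: "(nat \<Rightarrow> nat \<Rightarrow> nat) \<Rightarrow> nat \<Rightarrow> nat \<Rightarrow> nat \<Rightarrow> (nat \<Rightarrow> nat \<Rightarrow> nat)" where
  "updH H i a u = H(i := (H i)(a := u))"

lemma updH_upd[simp]: "updH (updH H i a v) i a u = updH H i a u"
  by (simp add: updH_def)

lemma updH_app: "updH H i a u j b = (if j = i \<and> b = a then u else H j b)"
  by (simp add: updH_def)

lemma updH_in: "H \<in> tab_space c s r \<Longrightarrow> i < c \<Longrightarrow> a < s \<Longrightarrow> u < 2^r \<Longrightarrow> updH H i a u \<in> tab_space c s r"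
  unfolding tab_space_def updH_def by (auto simp: PiE_iff extensional_def)

lemma updH_self: "H \<in> tab_space c s r \<Longrightarrow> updH H i a (H i a) = H"
  unfolding updH_def by auto

lemma tab_space_finite: "finite (tab_space c s r)"
  unfolding tab_space_def by (intro finite_PiE) auto

lemma tab_space_ne: "tab_space c s r \<noteq> {}"
proof -
  have "0 \<in> {..<(2::nat)^r}" by simp
  hence "{..<(2::nat)^r} \<noteq> {}" by blast
  thus ?thesis unfolding tab_space_def by (auto simp: PiE_eq_empty_iff)
qed

lemma sum_split_upd:
  fixes F :: "(nat \<Rightarrow> nat \<Rightarrow> nat) \<Rightarrow> real"
  assumes "i < c" "a < s"
  shows "(\<Sum>H\<in>tab_space c s r. F H) * 2^r = (\<Sum>H\<in>tab_space c s r. \<Sum>u<2^r. F (updH H i a u))"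
proof -
  let ?T = "tab_space c s r \<times> {..<(2::nat)^r}"
  let ?phi = "\<lambda>(H, u). (updH H i a u, H i a)"
  have inv: "?phi (?phi p) = p" if "p \<in> ?T" for p
    using that by (auto simp: updH_self updH_app tab_space_def)
  have into: "?phi p \<in> ?T" if "p \<in> ?T" for p
  proof -
    obtain H u where p0: "p = (H, u)" by (cases p)
    hence p: "p = (H, u)" "H \<in> tab_space c s r" "u < 2^r" using that by auto
    have "H i a < 2^r" using p assms unfolding tab_space_def by (auto simp: PiE_iff)
    thus ?thesis using p updH_in assms by auto
  qed
  have bij: "bij_betw ?phi ?T ?T"
    by (rule bij_betwI[where g = ?phi]) (use inv into in auto)
  have "(\<Sum>H\<in>tab_space c s r. \<Sum>u<2^r. F (updH H i a u)) = (\<Sum>p\<in>?T. (F \<circ> fst) (?phi p))"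
    by (simp add: sum.cartesian_product case_prod_beta)
  also have "\<dots> = (\<Sum>p\<in>?T. (F \<circ> fst) p)"
    by (rule sum.reindex_bij_betw[OF bij])
  also have "\<dots> = (\<Sum>(H,u)\<in>?T. F H)"
    by (intro sum.cong) auto
  also have "\<dots> = (\<Sum>H\<in>tab_space c s r. \<Sum>u<(2::nat)^r. F H)"
    by (rule sum.cartesian_product[symmetric])
  also have "\<dots> = (\<Sum>H\<in>tab_space c s r. 2^r * F H)"
    by simp
  also have "\<dots> = 2^r * (\<Sum>H\<in>tab_space c s r. F H)"
    by (rule sum_distrib_left[symmetric])
  finally show ?thesis by (simp add: mult.commute)
qed

definition xf :: "nat list \<Rightarrow> (nat \<Rightarrow> nat) \<Rightarrow> nat" where
  "xf L g = foldr (\<lambda>j. xor (g j)) L 0"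

lemma xf_Nil[simp]: "xf [] g = 0" and xf_Cons[simp]: "xf (j # L) g = xor (g j) (xf L g)"
  by (simp_all add: xf_def)

lemma xf_cong: "(\<And>j. j \<in> set L \<Longrightarrow> g j = g' j) \<Longrightarrow> xf L g = xf L g'"
  by (induction L) auto

lemma xf_upd:
  assumes "distinct L" "i \<in> set L"
  shows "xf L (g(i := w)) = xor (xf L (g(i := 0))) w"
  using assms
proof (induction L)
  case Nil then show ?case by simp
next
  case (Cons j L)
  show ?case
  proof (cases "j = i")
    case True
    hence "i \<notin> set L" using Cons by auto
    hence e: "xf L (g(i := w)) = xf L (g(i := 0))" by (intro xf_cong) auto
    have 1: "xf (j # L) (g(i := w)) = xor w (xf L (g(i := w)))" using True by (simp only: xf_Cons fun_upd_same)
    have 2: "xf (j # L) (g(i := 0)) = xor 0 (xf L (g(i := 0)))" using True by (simp only: xf_Cons fun_upd_same)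
    show ?thesis unfolding 1 2 e by (simp add: xor.commute)
  next
    case False
    then show ?thesis using Cons by (auto simp: xor.assoc xor.left_commute)
  qed
qed

lemma tab_hash_xf: "tab_hash c H x = xf [0..<c] (\<lambda>j. H j (x j))"
  by (simp add: tab_hash_def xf_def)

lemma tab_hash_upd_other:
  assumes "\<not> (i < c \<and> x i = a)"
  shows "tab_hash c (updH H i a u) x = tab_hash c H x"
  unfolding tab_hash_xf using assms by (intro xf_cong) (auto simp: updH_app)

lemma tab_hash_upd_same:
  assumes "i < c" "x i = a"
  shows "tab_hash c (updH H i a u) x = xor (tab_hash c (updH H i a 0) x) u"
proof -
  have e: "xf [0..<c] (\<lambda>j. updH H i a v j (x j)) = xf [0..<c] ((\<lambda>j. H j (x j))(i := v))" for v
    using assms by (intro xf_cong) (auto simp: updH_app)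
  show ?thesis
    unfolding tab_hash_xf e using xf_upd[of "[0..<c]" i "\<lambda>j. H j (x j)" u] assms by simp
qed

lemma tab_hash_lt:
  assumes "H \<in> tab_space c s r" "x \<in> keys c s"
  shows "tab_hash c H x < 2^r"
proof -
  have "\<forall>j\<in>set L. H j (x j) < 2^r \<Longrightarrow> xf L (\<lambda>j. H j (x j)) < (2::nat)^r" for L
    by (induction L) (auto intro: xor_lt_pow)
  moreover have "\<forall>j\<in>set [0..<c]. H j (x j) < 2^r"
    using assms unfolding tab_space_def keys_def by (auto simp: PiE_iff)
  ultimately show ?thesis unfolding tab_hash_xf by blast
qed

lemma xor_bij: "(u::nat) < 2^r \<Longrightarrow> bij_betw (\<lambda>z. xor z u) {..<2^r} {..<2^r}"
  by (rule bij_betwI[where g = "\<lambda>z. xor z u"]) (auto intro: xor_lt_pow simp: xor.assoc)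

lemma xor_inj: "inj (\<lambda>z::nat. xor z u)"
proof (rule injI)
  fix x y :: nat assume "xor x u = xor y u"
  hence "xor (xor x u) u = xor (xor y u) u" by simp
  thus "x = y" by (simp add: xor.assoc)
qed

lemma pow_ne: "{..<(2::nat)^r} \<noteq> {}"
proof -
  have "0 \<in> {..<(2::nat)^r}" by simp
  thus ?thesis by blast
qed

lemma step_exp:
  fixes Phi Phi' Yf :: "(nat \<Rightarrow> nat \<Rightarrow> nat) \<Rightarrow> real" and lam w k :: real
  assumes ia: "i < c" "a < s" and lam: "lam \<ge> 0"
    and inv: "\<And>H u. H \<in> tab_space c s r \<Longrightarrow> u < 2^r \<Longrightarrow> Phi' (updH H i a u) = Phi' H"
    and bound: "\<And>H. H \<in> tab_space c s r \<Longrightarrow>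
        Phi H \<le> w * Phi' H + (Yf H - (\<Sum>v<2^r. Yf (updH H i a v)) / 2^r)"
    and range: "\<And>H. H \<in> tab_space c s r \<Longrightarrow> 0 \<le> Yf H \<and> Yf H \<le> k"
  shows "(\<Sum>H\<in>tab_space c s r. exp (lam * Phi H)) \<le>
         exp (lam^2 * k^2 / 8) * (\<Sum>H\<in>tab_space c s r. exp (lam * w * Phi' H))"
proof -
  let ?T = "tab_space c s r"
  let ?n = "(2::nat)^r"
  define EY where "EY H = (\<Sum>v<?n. Yf (updH H i a v)) / ?n" for H
  have EYinv: "EY (updH H i a u) = EY H" for H u
    unfolding EY_def by simp
  have "(\<Sum>H\<in>?T. exp (lam * Phi H)) \<le> (\<Sum>H\<in>?T. exp (lam * w * Phi' H) * exp (lam * (Yf H - EY H)))"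
  proof (rule sum_mono)
    fix H assume H: "H \<in> ?T"
    have "lam * Phi H \<le> lam * (w * Phi' H + (Yf H - EY H))"
      using bound[OF H] lam unfolding EY_def by (intro mult_left_mono) auto
    also have "\<dots> = lam * w * Phi' H + lam * (Yf H - EY H)" by (simp add: algebra_simps)
    finally show "exp (lam * Phi H) \<le> exp (lam * w * Phi' H) * exp (lam * (Yf H - EY H))"
      by (simp add: exp_add[symmetric])
  qed
  also have "\<dots> = (\<Sum>H\<in>?T. \<Sum>u<?n. exp (lam * w * Phi' (updH H i a u)) * exp (lam * (Yf (updH H i a u) - EY (updH H i a u)))) / ?n"
    using sum_split_upd[OF ia, of "\<lambda>H. exp (lam * w * Phi' H) * exp (lam * (Yf H - EY H))" r]
    by (simp add: field_simps)
  also have "\<dots> = (\<Sum>H\<in>?T. \<Sum>u<?n. exp (lam * w * Phi' H) * exp (lam * (Yf (updH H i a u) - EY H))) / ?n"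
    by (intro arg_cong[where f="\<lambda>x. x / _"] sum.cong) (auto simp: inv EYinv)
  also have "\<dots> = (\<Sum>H\<in>?T. exp (lam * w * Phi' H) * ((\<Sum>u<?n. exp (lam * (Yf (updH H i a u) - EY H))) / ?n))"
    by (simp add: sum_distrib_left sum_divide_distrib)
  also have "\<dots> \<le> (\<Sum>H\<in>?T. exp (lam * w * Phi' H) * exp (lam^2 * (k - 0)^2 / 8))"
  proof (rule sum_mono, rule mult_left_mono)
    fix H assume H: "H \<in> ?T"
    have "(\<Sum>u\<in>{..<?n}. exp (lam * ((\<lambda>u. Yf (updH H i a u)) u - sum (\<lambda>u. Yf (updH H i a u)) {..<?n} / card {..<?n}))) / card {..<?n}
          \<le> exp (lam^2 * (k - 0)^2 / 8)"
      by (rule hoeffding_fin) (use range updH_in[OF H ia] pow_ne in auto)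
    thus "(\<Sum>u<?n. exp (lam * (Yf (updH H i a u) - EY H))) / ?n \<le> exp (lam^2 * (k - 0)^2 / 8)"
      unfolding EY_def by simp
  qed simp
  also have "\<dots> = exp (lam^2 * k^2 / 8) * (\<Sum>H\<in>?T. exp (lam * w * Phi' H))"
    by (simp add: sum_distrib_right mult.commute)
  finally show ?thesis .
qed

lemma shift_count:
  assumes "S \<subseteq> {..<(2::nat)^r}" "B \<subseteq> {..<2^r}"
  shows "(\<Sum>u<(2::nat)^r. card ((\<lambda>z. xor z u) ` S - B)) = card S * (2^r - card B)"
proof -
  let ?n = "(2::nat)^r"
  have fS: "finite S" using assms finite_subset by blast
  have "card ((\<lambda>z. xor z u) ` S - B) = (\<Sum>z\<in>S. if xor z u \<notin> B then 1 else 0)" for u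
  proof -
    have "(\<lambda>z. xor z u) ` S - B = (\<lambda>z. xor z u) ` {z\<in>S. xor z u \<notin> B}" by auto
    hence "card ((\<lambda>z. xor z u) ` S - B) = card {z\<in>S. xor z u \<notin> B}"
      using card_image[OF inj_on_subset[OF xor_inj]] by simp
    thus ?thesis using fS by (simp add: sum.If_cases Int_def)
  qed
  hence "(\<Sum>u<?n. card ((\<lambda>z. xor z u) ` S - B)) = (\<Sum>z\<in>S. \<Sum>u<?n. if xor z u \<notin> B then 1 else 0)"
    by (simp add: sum.swap[of _ S])
  also have "\<dots> = (\<Sum>z\<in>S. ?n - card B)"
  proof (rule sum.cong)
    fix z assume z: "z \<in> S"
    hence zn: "z < ?n" using assms by auto
    have bij: "bij_betw (\<lambda>u. xor u z) {..<?n} {..<?n}" by (rule xor_bij[OF zn])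
    have "(\<Sum>u<?n. if xor z u \<notin> B then 1 else 0) = card {u\<in>{..<?n}. xor u z \<notin> B}"
      by (simp add: sum.If_cases xor.commute Int_def)
    also have "\<dots> = card ((\<lambda>u. xor u z) ` {u\<in>{..<?n}. xor u z \<notin> B})"
      by (rule card_image[symmetric], rule inj_on_subset[OF xor_inj]) auto
    also have "(\<lambda>u. xor u z) ` {u\<in>{..<?n}. xor u z \<notin> B} = {..<?n} - B"
      using bij unfolding bij_betw_def by auto
    also have "card ({..<?n} - B) = ?n - card B"
      using assms by (simp add: card_Diff_subset finite_subset)
    finally show "(\<Sum>u<?n. if xor z u \<notin> B then 1 else 0) = ?n - card B" .
  qed simp
  finally show ?thesis by simp
qed

lemma card_loss_coll:
  assumes "finite A"
  shows "card A \<le> card (f ` A) + card {(x, y) \<in> A \<times> A. x \<noteq> y \<and> f x = f y}"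
  using assms
proof (induction A rule: finite_induct)
  case empty then show ?case by simp
next
  case (insert x A)
  let ?P = "\<lambda>A. {(x, y) \<in> A \<times> A. x \<noteq> y \<and> f x = f y}"
  have fin: "finite (?P (insert x A))"
    by (rule finite_subset[of _ "insert x A \<times> insert x A"]) (use insert in auto)
  show ?case
  proof (cases "f x \<in> f ` A")
    case True
    then obtain y where y: "y \<in> A" "f y = f x" by auto
    have "?P A \<subset> ?P (insert x A)"
    proof
      show "?P A \<subseteq> ?P (insert x A)" by auto
      have "(x, y) \<in> ?P (insert x A)" "(x, y) \<notin> ?P A" using y insert by auto
      thus "?P A \<noteq> ?P (insert x A)" by blast
    qed
    hence "card (?P A) < card (?P (insert x A))" using fin psubset_card_mono by blast
    moreover have "f ` insert x A = f ` A" using True by auto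
    ultimately show ?thesis using insert by simp
  next
    case False
    have "?P A \<subseteq> ?P (insert x A)" by auto
    hence "card (?P A) \<le> card (?P (insert x A))" using fin card_mono by blast
    moreover have "card (f ` insert x A) = Suc (card (f ` A))" using False insert by simp
    ultimately show ?thesis using insert by simp
  qed
qed

lemma pt_lemma:
  assumes c: "c \<ge> 1" and X: "finite X" "X \<subseteq> keys c s" "X \<noteq> {}"
  shows "\<exists>i<c. \<exists>x\<in>X. real (card {y\<in>X. y i = x i}) \<le> real (card X) powr (1 - 1 / real c)"
proof (rule ccontr)
  assume "\<not> ?thesis"
  hence big: "\<And>i x. i < c \<Longrightarrow> x \<in> X \<Longrightarrow> real (card {y\<in>X. y i = x i}) > real (card X) powr (1 - 1 / real c)"
    by force
  define m where "m = real (card X)"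
  define g where "g = m powr (1 - 1 / real c)"
  have m0: "m > 0" using X by (simp add: m_def card_gt_0_iff)
  have g0: "g > 0" using m0 by (simp add: g_def)
  define C where "C i = (\<lambda>x. x i) ` X" for i
  have Cbound: "real (card (C i)) < m powr (1 / real c)" if i: "i < c" for i
  proof -
    have finC: "finite (C i)" using X by (simp add: C_def)
    have neC: "C i \<noteq> {}" using X by (simp add: C_def)
    have "m = (\<Sum>a\<in>C i. real (card {y\<in>X. y i = a}))"
    proof -
      have "card X = card (\<Union>a\<in>C i. {y\<in>X. y i = a})"
        by (rule arg_cong[where f = card]) (auto simp: C_def)
      also have "\<dots> = (\<Sum>a\<in>C i. card {y\<in>X. y i = a})"
        by (rule card_UN_disjoint) (use X finC in auto)
      finally show ?thesis by (simp add: m_def)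
    qed
    also have "\<dots> > (\<Sum>a\<in>C i. g)"
      by (rule sum_strict_mono[OF finC neC]) (use big i in \<open>auto simp: C_def g_def m_def\<close>)
    finally have "real (card (C i)) * g < m" by (simp add: mult.commute)
    hence "real (card (C i)) < m / g" using g0 by (simp add: field_simps)
    also have "m / g = m powr (1 / real c)"
    proof -
      have "m powr (1 / real c) = m powr (1 - (1 - 1 / real c))" by simp
      also have "\<dots> = m powr 1 / m powr (1 - 1 / real c)" by (rule powr_diff)
      finally show ?thesis using m0 by (simp add: g_def)
    qed
    finally show ?thesis .
  qed
  have sub: "X \<subseteq> PiE {..<c} C"
    using X unfolding keys_def C_def by (auto simp: PiE_iff)
  have "m \<le> real (card (PiE {..<c} C))"
    unfolding m_def by (intro of_nat_mono card_mono) (use sub X in \<open>auto simp: C_def intro!: finite_PiE\<close>)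
  also have "\<dots> = (\<Prod>i<c. real (card (C i)))" by (simp add: card_PiE)
  also have "\<dots> < (\<Prod>i<c. m powr (1 / real c))"
    by (rule prod_mono_strict[of 0]) (use c Cbound in \<open>auto intro: less_imp_le\<close>)
  also have "\<dots> = m"
    using m0 c by (simp add: powr_realpow[symmetric] powr_powr)
  finally show False by simp
qed

lemma hash_img_sub:
  "H \<in> tab_space c s r \<Longrightarrow> X \<subseteq> keys c s \<Longrightarrow> tab_hash c H ` X \<subseteq> {..<2^r}"
  using tab_hash_lt by blast

lemma hash_img_card:
  "H \<in> tab_space c s r \<Longrightarrow> X \<subseteq> keys c s \<Longrightarrow> card (tab_hash c H ` X) \<le> 2^r"
  using card_mono[OF _ hash_img_sub] by fastforce

lemma step_facts:
  assumes X: "X \<subseteq> keys c s" "finite X" and ia: "i < c" "a < s"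
    and G: "G = {y\<in>X. y i = a}" and X': "X' = X - G" and H: "H \<in> tab_space c s r"
  shows "\<And>u. u < 2^r \<Longrightarrow> tab_hash c (updH H i a u) ` X' = tab_hash c H ` X'"
    and "\<And>y. y \<in> X' \<Longrightarrow> u < 2^r \<Longrightarrow> tab_hash c (updH H i a u) y = tab_hash c H y"
    and "real (card (tab_hash c H ` X)) = real (card (tab_hash c H ` X')) +
           real (card (tab_hash c H ` G - tab_hash c H ` X'))"
    and "(\<Sum>v<(2::nat)^r. real (card (tab_hash c (updH H i a v) ` G - tab_hash c (updH H i a v) ` X'))) / 2^r
          = real (card (tab_hash c H ` G)) * (2^r - real (card (tab_hash c H ` X'))) / 2^r"
    and "card (tab_hash c H ` G) \<le> card G" "card (tab_hash c H ` G) \<le> 2^r"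
    and "card (tab_hash c H ` G - tab_hash c H ` X') \<le> card G"
proof -
  have oth: "tab_hash c (updH H i a u) y = tab_hash c H y" if "y \<in> X'" for y u
    using that X' G by (intro tab_hash_upd_other) auto
  show "\<And>y. y \<in> X' \<Longrightarrow> u < 2^r \<Longrightarrow> tab_hash c (updH H i a u) y = tab_hash c H y" using oth by blast
  show inv: "tab_hash c (updH H i a u) ` X' = tab_hash c H ` X'" for u
    using oth by (auto simp: image_def)
  have GX: "G \<subseteq> X" "X' \<subseteq> X" using G X' by auto
  have fin: "finite G" "finite X'" using X GX finite_subset by blast+
  have XU: "X = X' \<union> G" using G X' by auto
  show "real (card (tab_hash c H ` X)) = real (card (tab_hash c H ` X')) +
           real (card (tab_hash c H ` G - tab_hash c H ` X'))"
  proof -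
    have "tab_hash c H ` X = tab_hash c H ` X' \<union> (tab_hash c H ` G - tab_hash c H ` X')"
      using XU by auto
    moreover have "card (tab_hash c H ` X' \<union> (tab_hash c H ` G - tab_hash c H ` X')) =
        card (tab_hash c H ` X') + card (tab_hash c H ` G - tab_hash c H ` X')"
      by (rule card_Un_disjoint) (use fin in auto)
    ultimately show ?thesis by simp
  qed
  define S where "S = tab_hash c (updH H i a 0) ` G"
  define B where "B = tab_hash c H ` X'"
  have H0: "updH H i a 0 \<in> tab_space c s r" by (rule updH_in[OF H ia]) simp
  have Ssub: "S \<subseteq> {..<2^r}" unfolding S_def by (rule hash_img_sub[OF H0]) (use X GX in auto)
  have Bsub: "B \<subseteq> {..<2^r}" unfolding B_def by (rule hash_img_sub[OF H]) (use X GX in auto)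
  have shiftG: "tab_hash c (updH H i a u) ` G = (\<lambda>z. xor z u) ` S" for u
  proof -
    have "tab_hash c (updH H i a u) y = xor (tab_hash c (updH H i a 0) y) u" if "y \<in> G" for y
      using that G ia by (intro tab_hash_upd_same) auto
    thus ?thesis unfolding S_def by (auto simp: image_def)
  qed
  have cardS: "card (tab_hash c H ` G) = card S"
  proof -
    have "tab_hash c H ` G = tab_hash c (updH H i a (H i a)) ` G" by (simp add: updH_self[OF H])
    also have "\<dots> = (\<lambda>z. xor z (H i a)) ` S" by (rule shiftG)
    finally show ?thesis using card_image[OF inj_on_subset[OF xor_inj]] by simp
  qed
  have cB: "card B \<le> 2^r" using card_mono[OF _ Bsub] by simp
  have "(\<Sum>v<(2::nat)^r. real (card (tab_hash c (updH H i a v) ` G - tab_hash c (updH H i a v) ` X')))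
      = (\<Sum>v<(2::nat)^r. real (card ((\<lambda>z. xor z v) ` S - B)))"
    by (intro sum.cong) (auto simp: shiftG inv B_def)
  also have "\<dots> = real (\<Sum>v<(2::nat)^r. card ((\<lambda>z. xor z v) ` S - B))" by simp
  also have "\<dots> = real (card S * (2^r - card B))" by (subst shift_count[OF Ssub Bsub]) simp
  also have "\<dots> = real (card S) * (2^r - real (card B))" using cB by (simp add: of_nat_diff)
  finally show "(\<Sum>v<(2::nat)^r. real (card (tab_hash c (updH H i a v) ` G - tab_hash c (updH H i a v) ` X'))) / 2^r
          = real (card (tab_hash c H ` G)) * (2^r - real (card (tab_hash c H ` X'))) / 2^r"
    by (simp add: cardS B_def)
  show "card (tab_hash c H ` G) \<le> card G" using fin card_image_le by blast
  show "card (tab_hash c H ` G) \<le> 2^r" by (rule hash_img_card[OF H]) (use X GX in auto)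
  show "card (tab_hash c H ` G - tab_hash c H ` X') \<le> card G"
    using fin card_image_le[of G "tab_hash c H"] card_Diff_subset card_mono
    by (meson Diff_subset finite_imageI le_trans)
qed

lemma pow_comb:
  fixes k m' :: real
  assumes c: "c \<ge> (1::nat)" and k: "k \<ge> 0" and m': "m' \<ge> 0"
    and kb: "k \<le> (m' + k) powr (1 - 1 / real c)"
  shows "k^2 + m' powr (2 - 1 / real c) \<le> (m' + k) powr (2 - 1 / real c)"
proof -
  define g where "g = (m' + k) powr (1 - 1 / real c)"
  have ex: "1 - 1 / real c \<ge> 0" using c by (simp add: field_simps)
  have split: "x powr (2 - 1 / real c) = x * x powr (1 - 1 / real c)" if "x \<ge> 0" for x :: real
  proof (cases "x = 0")
    case False
    hence "x powr (2 - 1 / real c) = x powr (1 + (1 - 1 / real c))" by simp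
    also have "\<dots> = x powr 1 * x powr (1 - 1 / real c)" by (rule powr_add)
    finally show ?thesis using False that by simp
  qed simp
  have "m' powr (1 - 1 / real c) \<le> g" unfolding g_def by (rule powr_mono2[OF ex m']) (use k in simp)
  hence 1: "m' powr (2 - 1 / real c) \<le> m' * g" using split[OF m'] m' by (simp add: mult_left_mono)
  have 2: "k^2 \<le> k * g" using kb k by (simp add: g_def power2_eq_square mult_left_mono)
  have "(m' + k) powr (2 - 1 / real c) = (m' + k) * g" unfolding g_def by (rule split) (use k m' in simp)
  thus ?thesis using 1 2 by (simp add: algebra_simps)
qed

lemma qk_bound:
  fixes nr :: real
  assumes "nr \<ge> 1"
  shows "(1 - 1 / nr)^k - (1 - real k / nr) \<le> real k^2 / nr^2"
    and "1 - real k / nr \<le> (1 - 1 / nr)^k"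
proof -
  have b: "1 - real j / nr \<le> (1 - 1 / nr)^j" for j
    using Bernoulli_inequality[of "- 1 / nr" j] assms by (simp add: field_simps)
  show "1 - real k / nr \<le> (1 - 1 / nr)^k" by (rule b)
  show "(1 - 1 / nr)^k - (1 - real k / nr) \<le> real k^2 / nr^2"
  proof (induction k)
    case 0 then show ?case by simp
  next
    case (Suc k)
    have "(1 - 1 / nr)^Suc k - (1 - real (Suc k) / nr) =
          ((1 - 1 / nr)^k - (1 - real k / nr)) + (1 - (1 - 1 / nr)^k) / nr"
    proof -
      have nz: "nr \<noteq> 0" using assms by simp
      show ?thesis using nz by (simp add: field_simps)
    qed
    also have "\<dots> \<le> real k^2 / nr^2 + (real k / nr) / nr"
      using Suc b[of k] assms by (intro add_mono divide_right_mono) auto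
    also have "\<dots> \<le> real (Suc k)^2 / nr^2"
      using assms by (simp add: field_simps power2_eq_square)
    finally show ?case .
  qed
qed

lemma pick_group:
  assumes c: "c \<ge> 1" and X: "finite X" "X \<subseteq> keys c s" "X \<noteq> {}"
  obtains i a where "i < c" "a < s" "{y\<in>X. y i = a} \<noteq> {}"
    "real (card {y\<in>X. y i = a}) \<le> real (card X) powr (1 - 1 / real c)"
proof -
  obtain i x where ix: "i < c" "x \<in> X" "real (card {y\<in>X. y i = x i}) \<le> real (card X) powr (1 - 1 / real c)"
    using pt_lemma[OF c X] by blast
  have "x i < s" using ix X unfolding keys_def by (auto simp: PiE_iff)
  moreover have "{y\<in>X. y i = x i} \<noteq> {}" using ix by auto
  ultimately show ?thesis using that ix by blast
qed

lemma upper_ind: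
  assumes c: "c \<ge> 1"
  shows "finite X \<Longrightarrow> X \<subseteq> keys c s \<Longrightarrow> \<exists>P::real. 0 \<le> P \<and> P \<le> (1 - 1 / 2^r)^card X \<and>
     2^r * ((1 - 1 / 2^r)^card X - P) \<le> real (card X) powr (2 - 1 / real c) / 2^r \<and>
     (\<forall>lam\<ge>0. (\<Sum>H\<in>tab_space c s r. exp (lam * (2^r * P - (2^r - real (card (tab_hash c H ` X))))))
        \<le> real (card (tab_space c s r)) * exp (lam^2 * real (card X) powr (2 - 1 / real c) / 8))"
proof (induction "card X" arbitrary: X rule: less_induct)
  case less
  let ?T = "tab_space c s r"
  let ?nr = "(2::real)^r"
  let ?q = "1 - 1 / (2::real)^r"
  let ?b = "2 - 1 / real c"
  have nr1: "?nr \<ge> 1" by simp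
  show ?case
  proof (cases "X = {}")
    case True
    show ?thesis
      by (rule exI[of _ 1]) (simp add: True)
  next
    case False
    obtain i a where ia: "i < c" "a < s" and Gne: "{y\<in>X. y i = a} \<noteq> {}"
      and Gb: "real (card {y\<in>X. y i = a}) \<le> real (card X) powr (1 - 1 / real c)"
      using pick_group[OF c less.prems False] by blast
    define G where "G = {y\<in>X. y i = a}"
    define X' where "X' = X - G"
    have GX: "G \<subseteq> X" "X' \<subseteq> X" by (auto simp: G_def X'_def)
    have finG: "finite G" "finite X'" using less.prems GX finite_subset by blast+
    have cardX: "card X = card X' + card G"
    proof -
      have "X = X' \<union> G" "X' \<inter> G = {}" by (auto simp: G_def X'_def)
      thus ?thesis using finG card_Un_disjoint by metis
    qed
    have Gpos: "card G > 0" using Gne finG by (auto simp: G_def card_gt_0_iff)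
    have lt: "card X' < card X" using cardX Gpos by simp
    obtain P' where P'0: "0 \<le> P'" and P'1: "P' \<le> ?q^card X'"
      and P'b: "?nr * (?q^card X' - P') \<le> real (card X') powr ?b / ?nr"
      and P'e: "\<And>lam. lam \<ge> 0 \<Longrightarrow> (\<Sum>H\<in>?T. exp (lam * (?nr * P' - (?nr - real (card (tab_hash c H ` X'))))))
        \<le> real (card ?T) * exp (lam^2 * real (card X') powr ?b / 8)"
      using less.hyps[OF lt] finG(2) GX less.prems by (meson order_trans)
    define k where "k = card G"
    define a0 where "a0 = max 0 (1 - real k / ?nr)"
    define P where "P = P' * a0"
    have q0: "0 \<le> ?q" "?q \<le> 1" using nr1 by (auto simp: field_simps)
    have a00: "0 \<le> a0" "a0 \<le> 1" by (auto simp: a0_def)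
    have a0q: "a0 \<le> ?q^k" using qk_bound(2)[OF nr1, of k] by (auto simp: a0_def)
    have qa0: "?q^k - a0 \<le> real k^2 / ?nr^2"
      using qk_bound(1)[OF nr1, of k] by (auto simp: a0_def)
    have comb: "real k^2 + real (card X') powr ?b \<le> real (card X) powr ?b"
      using pow_comb[OF c, of "real k" "real (card X')"] Gb cardX by (simp add: k_def G_def add.commute)
    have P'le1: "P' \<le> 1" using P'1 q0 power_le_one order_trans by blast
    have "P \<ge> 0" using P'0 a00 by (simp add: P_def)
    moreover have "P \<le> ?q^card X"
    proof -
      have "P' * a0 \<le> ?q^card X' * ?q^k" by (rule mult_mono) (use P'1 a0q P'0 q0 a00 in auto)
      thus ?thesis by (simp add: P_def cardX k_def power_add)
    qed
    moreover have "?nr * (?q^card X - P) \<le> real (card X) powr ?b / ?nr"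
    proof -
      have "?q^card X - P = ?q^k * (?q^card X' - P') + P' * (?q^k - a0)"
        by (simp add: P_def cardX k_def power_add algebra_simps)
      also have "\<dots> \<le> (?q^card X' - P') + (?q^k - a0)"
      proof (rule add_mono)
        show "?q^k * (?q^card X' - P') \<le> ?q^card X' - P'"
          using P'1 q0 by (intro mult_left_le_one_le) (auto simp: power_le_one)
        show "P' * (?q^k - a0) \<le> ?q^k - a0"
          using P'le1 a0q P'0 by (intro mult_left_le_one_le) auto
      qed
      finally have "?nr * (?q^card X - P) \<le> ?nr * (?q^card X' - P') + ?nr * (?q^k - a0)"
        by (simp add: distrib_left[symmetric])
      also have "\<dots> \<le> real (card X') powr ?b / ?nr + ?nr * (real k^2 / ?nr^2)"
        using P'b qa0 by (intro add_mono mult_left_mono) auto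
      also have "\<dots> = (real k^2 + real (card X') powr ?b) / ?nr"
        by (simp add: power2_eq_square field_simps)
      also have "\<dots> \<le> real (card X) powr ?b / ?nr"
        using comb by (intro divide_right_mono) auto
      finally show ?thesis .
    qed
    moreover have "\<forall>lam\<ge>0. (\<Sum>H\<in>?T. exp (lam * (?nr * P - (?nr - real (card (tab_hash c H ` X))))))
        \<le> real (card ?T) * exp (lam^2 * real (card X) powr ?b / 8)"
    proof (intro allI impI)
      fix lam :: real assume lam: "lam \<ge> 0"
      define Yf where "Yf H = real (card (tab_hash c H ` G - tab_hash c H ` X'))" for H
      have "(\<Sum>H\<in>?T. exp (lam * (?nr * P - (?nr - real (card (tab_hash c H ` X))))))
          \<le> exp (lam^2 * real k^2 / 8) * (\<Sum>H\<in>?T. exp (lam * a0 * (?nr * P' - (?nr - real (card (tab_hash c H ` X'))))))"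
      proof (rule step_exp[OF ia lam, where Yf = Yf])
        fix H and u :: nat assume H: "H \<in> ?T" and u: "u < 2^r"
        show "?nr * P' - (?nr - real (card (tab_hash c (updH H i a u) ` X'))) = ?nr * P' - (?nr - real (card (tab_hash c H ` X')))"
          using step_facts(1)[OF less.prems(2,1) ia G_def X'_def H u] by simp
      next
        fix H assume H: "H \<in> ?T"
        note sf = step_facts[OF less.prems(2,1) ia G_def X'_def H]
        show "0 \<le> Yf H \<and> Yf H \<le> real k" using sf(7) by (simp add: Yf_def k_def)
        define e' where "e' = ?nr - real (card (tab_hash c H ` X'))"
        define sG where "sG = real (card (tab_hash c H ` G))"
        have e'0: "0 \<le> e'" using hash_img_card[OF H, of X'] GX less.prems by (simp add: e'_def)
        have EY: "(\<Sum>v<2^r. Yf (updH H i a v)) / ?nr = sG * e' / ?nr"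
          using sf(4) by (simp add: Yf_def sG_def e'_def)
        have sGk: "sG \<le> real k" "sG \<le> ?nr" using sf(5,6) by (simp_all add: sG_def k_def)
        have "sG * e' / ?nr \<le> (1 - a0) * e'"
        proof (cases "real k / ?nr \<le> 1")
          case True
          hence "1 - a0 = real k / ?nr" by (simp add: a0_def)
          thus ?thesis using sGk e'0 by (simp add: divide_right_mono mult_right_mono)
        next
          case False
          hence "1 - a0 = 1" by (simp add: a0_def)
          thus ?thesis using sGk e'0 by (simp add: field_simps mult_left_mono)
        qed
        hence "?nr * P - (?nr - real (card (tab_hash c H ` X))) \<le> a0 * (?nr * P' - e') + (Yf H - sG * e' / ?nr)"
          using sf(3) by (simp add: P_def Yf_def e'_def algebra_simps)
        thus "?nr * P - (?nr - real (card (tab_hash c H ` X))) \<le>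
            a0 * (?nr * P' - (?nr - real (card (tab_hash c H ` X')))) + (Yf H - (\<Sum>v<2^r. Yf (updH H i a v)) / ?nr)"
          using EY by (simp add: e'_def)
      qed
      also have "\<dots> \<le> exp (lam^2 * real k^2 / 8) * (real (card ?T) * exp ((lam * a0)^2 * real (card X') powr ?b / 8))"
        using P'e[of "lam * a0"] lam a00 by (intro mult_left_mono) (auto simp: mult.assoc)
      also have "\<dots> \<le> exp (lam^2 * real k^2 / 8) * (real (card ?T) * exp (lam^2 * real (card X') powr ?b / 8))"
      proof -
        have "a0^2 \<le> 1" using a00 by (simp add: power_le_one)
        hence "lam^2 * a0^2 \<le> lam^2 * 1" by (intro mult_left_mono) auto
        hence "(lam * a0)^2 \<le> lam^2" by (simp add: power_mult_distrib)
        hence "(lam * a0)^2 * real (card X') powr ?b / 8 \<le> lam^2 * real (card X') powr ?b / 8"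
          by (intro divide_right_mono mult_right_mono) auto
        thus ?thesis by (intro mult_left_mono) auto
      qed
      also have "\<dots> = real (card ?T) * exp (lam^2 * (real k^2 + real (card X') powr ?b) / 8)"
        by (simp add: exp_add[symmetric] algebra_simps add_divide_distrib)
      also have "\<dots> \<le> real (card ?T) * exp (lam^2 * real (card X) powr ?b / 8)"
        using comb by (intro mult_left_mono) (auto intro!: divide_right_mono mult_left_mono)
      finally show "(\<Sum>H\<in>?T. exp (lam * (?nr * P - (?nr - real (card (tab_hash c H ` X))))))
        \<le> real (card ?T) * exp (lam^2 * real (card X) powr ?b / 8)" .
    qed
    ultimately show ?thesis by blast
  qed
qed

definition coll :: "nat \<Rightarrow> (nat \<Rightarrow> nat \<Rightarrow> nat) \<Rightarrow> ((nat \<Rightarrow> nat) \<times> (nat \<Rightarrow> nat)) set \<Rightarrow> real" where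
  "coll c H P = real (card {p\<in>P. tab_hash c H (fst p) = tab_hash c H (snd p)})"

lemma lower_ind:
  assumes c: "c \<ge> 1"
  shows "finite X \<Longrightarrow> X \<subseteq> keys c s \<Longrightarrow> \<exists>P. P \<subseteq> {(x, y)\<in>X \<times> X. x \<noteq> y} \<and>
     real (card P) \<le> real (card X) powr (2 - 1 / real c) \<and>
     (\<forall>lam\<ge>0. (\<Sum>H\<in>tab_space c s r. exp (lam * ((2^r - real (card (tab_hash c H ` X))) - 2^r * (1 - 1 / 2^r)^card X - coll c H P)))
        \<le> real (card (tab_space c s r)) * exp (lam^2 * real (card X) powr (2 - 1 / real c) / 8))"
proof (induction "card X" arbitrary: X rule: less_induct)
  case less
  let ?T = "tab_space c s r"
  let ?nr = "(2::real)^r"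
  let ?q = "1 - 1 / (2::real)^r"
  let ?b = "2 - 1 / real c"
  have nr1: "?nr \<ge> 1" by simp
  show ?case
  proof (cases "X = {}")
    case True
    show ?thesis
      by (rule exI[of _ "{}"]) (simp add: True coll_def)
  next
    case False
    obtain i a where ia: "i < c" "a < s" and Gne: "{y\<in>X. y i = a} \<noteq> {}"
      and Gb: "real (card {y\<in>X. y i = a}) \<le> real (card X) powr (1 - 1 / real c)"
      using pick_group[OF c less.prems False] by blast
    define G where "G = {y\<in>X. y i = a}"
    define X' where "X' = X - G"
    have GX: "G \<subseteq> X" "X' \<subseteq> X" by (auto simp: G_def X'_def)
    have finG: "finite G" "finite X'" using less.prems GX finite_subset by blast+
    have cardX: "card X = card X' + card G"
    proof -
      have "X = X' \<union> G" "X' \<inter> G = {}" by (auto simp: G_def X'_def)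
      thus ?thesis using finG card_Un_disjoint by metis
    qed
    have Gpos: "card G > 0" using Gne finG by (auto simp: G_def card_gt_0_iff)
    have lt: "card X' < card X" using cardX Gpos by simp
    obtain P' where P'sub: "P' \<subseteq> {(x, y)\<in>X' \<times> X'. x \<noteq> y}"
      and P'c: "real (card P') \<le> real (card X') powr ?b"
      and P'e: "\<And>lam. lam \<ge> 0 \<Longrightarrow> (\<Sum>H\<in>?T. exp (lam * ((?nr - real (card (tab_hash c H ` X'))) - ?nr * ?q^card X' - coll c H P')))
        \<le> real (card ?T) * exp (lam^2 * real (card X') powr ?b / 8)"
      using less.hyps[OF lt] finG(2) GX less.prems by (meson order_trans)
    define k where "k = card G"
    define PG where "PG = {(x, y)\<in>G \<times> G. x \<noteq> y}"
    define P where "P = P' \<union> PG"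
    have q0: "0 \<le> ?q" "?q \<le> 1" using nr1 by (auto simp: field_simps)
    have qk1: "1 - ?q^k \<le> real k / ?nr" using qk_bound(2)[OF nr1, of k] by simp
    have comb: "real k^2 + real (card X') powr ?b \<le> real (card X) powr ?b"
      using pow_comb[OF c, of "real k" "real (card X')"] Gb cardX by (simp add: k_def G_def add.commute)
    have finPG: "finite PG" unfolding PG_def by (rule finite_subset[of _ "G \<times> G"]) (use finG in auto)
    have finP': "finite P'" by (rule finite_subset[of _ "X' \<times> X'"]) (use P'sub finG in auto)
    have disj: "P' \<inter> PG = {}" using P'sub by (auto simp: PG_def X'_def)
    have "P \<subseteq> {(x, y)\<in>X \<times> X. x \<noteq> y}" using P'sub GX by (auto simp: P_def PG_def)
    moreover have "real (card P) \<le> real (card X) powr ?b"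
    proof -
      have "card PG \<le> card (G \<times> G)" unfolding PG_def by (rule card_mono) (use finG in auto)
      hence "card PG \<le> k * k" by (simp add: k_def card_cartesian_product)
      hence h: "real (card PG) \<le> real k^2" by (metis of_nat_le_iff of_nat_mult power2_eq_square)
      have "card P = card P' + card PG" unfolding P_def by (rule card_Un_disjoint[OF finP' finPG disj])
      hence "real (card P) = real (card P') + real (card PG)" by simp
      thus ?thesis using P'c comb h by linarith
    qed
    moreover have "\<forall>lam\<ge>0. (\<Sum>H\<in>?T. exp (lam * ((?nr - real (card (tab_hash c H ` X))) - ?nr * ?q^card X - coll c H P)))
        \<le> real (card ?T) * exp (lam^2 * real (card X) powr ?b / 8)"
    proof (intro allI impI)
      fix lam :: real assume lam: "lam \<ge> 0"
      define Yf where "Yf H = real (card (tab_hash c H ` G - tab_hash c H ` X'))" for H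
      define Y2 where "Y2 H = real k - Yf H" for H
      have collU: "coll c H P = coll c H P' + coll c H PG" for H
      proof -
        have "{p\<in>P. tab_hash c H (fst p) = tab_hash c H (snd p)} =
              {p\<in>P'. tab_hash c H (fst p) = tab_hash c H (snd p)} \<union> {p\<in>PG. tab_hash c H (fst p) = tab_hash c H (snd p)}"
          by (auto simp: P_def)
        moreover have "card ({p\<in>P'. tab_hash c H (fst p) = tab_hash c H (snd p)} \<union> {p\<in>PG. tab_hash c H (fst p) = tab_hash c H (snd p)})
            = card {p\<in>P'. tab_hash c H (fst p) = tab_hash c H (snd p)} + card {p\<in>PG. tab_hash c H (fst p) = tab_hash c H (snd p)}"
          by (rule card_Un_disjoint) (use finP' finPG disj in auto)
        ultimately show ?thesis by (simp add: coll_def)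
      qed
      have "(\<Sum>H\<in>?T. exp (lam * ((?nr - real (card (tab_hash c H ` X))) - ?nr * ?q^card X - coll c H P)))
          \<le> exp (lam^2 * real k^2 / 8) * (\<Sum>H\<in>?T. exp (lam * ?q^k * ((?nr - real (card (tab_hash c H ` X'))) - ?nr * ?q^card X' - coll c H P')))"
      proof (rule step_exp[OF ia lam, where Yf = Y2])
        fix H and u :: nat assume H: "H \<in> ?T" and u: "u < 2^r"
        have "coll c (updH H i a u) P' = coll c H P'"
        proof -
          have "{p\<in>P'. tab_hash c (updH H i a u) (fst p) = tab_hash c (updH H i a u) (snd p)} =
                {p\<in>P'. tab_hash c H (fst p) = tab_hash c H (snd p)}"
            using step_facts(2)[OF less.prems(2,1) ia G_def X'_def H _ u] P'sub by auto
          thus ?thesis by (simp add: coll_def)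
        qed
        thus "(?nr - real (card (tab_hash c (updH H i a u) ` X'))) - ?nr * ?q^card X' - coll c (updH H i a u) P' =
              (?nr - real (card (tab_hash c H ` X'))) - ?nr * ?q^card X' - coll c H P'"
          using step_facts(1)[OF less.prems(2,1) ia G_def X'_def H u] by simp
      next
        fix H assume H: "H \<in> ?T"
        note sf = step_facts[OF less.prems(2,1) ia G_def X'_def H]
        show "0 \<le> Y2 H \<and> Y2 H \<le> real k" using sf(7) by (simp add: Y2_def Yf_def k_def)
        define e' where "e' = ?nr - real (card (tab_hash c H ` X'))"
        define sG where "sG = real (card (tab_hash c H ` G))"
        have e'0: "0 \<le> e'" using hash_img_card[OF H, of X'] GX less.prems by (simp add: e'_def)
        have e'n: "e' \<le> ?nr" by (simp add: e'_def)
        have EY: "(\<Sum>v<2^r. Y2 (updH H i a v)) / ?nr = real k - sG * e' / ?nr"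
        proof -
          have "(\<Sum>v<(2::nat)^r. Y2 (updH H i a v)) = (\<Sum>v<(2::nat)^r. real k) - (\<Sum>v<(2::nat)^r. Yf (updH H i a v))"
            unfolding Y2_def by (rule sum_subtractf)
          also have "(\<Sum>v<(2::nat)^r. real k) = ?nr * real k" by simp
          finally show ?thesis using sf(4) by (simp add: Yf_def sG_def e'_def diff_divide_distrib)
        qed
        have sGk: "sG \<le> real k" using sf(5) by (simp add: sG_def k_def)
        have loss: "real k - sG \<le> coll c H PG"
        proof -
          have "card G \<le> card (tab_hash c H ` G) + card {(x, y)\<in>G \<times> G. x \<noteq> y \<and> tab_hash c H x = tab_hash c H y}"
            by (rule card_loss_coll[OF finG(1)])
          moreover have "{(x, y)\<in>G \<times> G. x \<noteq> y \<and> tab_hash c H x = tab_hash c H y} =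
                         {p\<in>PG. tab_hash c H (fst p) = tab_hash c H (snd p)}"
            by (auto simp: PG_def)
          ultimately show ?thesis by (simp add: coll_def sG_def k_def)
        qed
        have C'0: "0 \<le> coll c H P'" by (simp add: coll_def)
        have key: "e' * (1 - ?q^k) - sG * e' / ?nr \<le> coll c H PG + (1 - ?q^k) * coll c H P'"
        proof -
          have "e' * (1 - ?q^k) \<le> e' * (real k / ?nr)" using e'0 qk1 by (intro mult_left_mono)
          moreover have "e' * (real k / ?nr) - sG * e' / ?nr = e' * (real k - sG) / ?nr"
            by (simp add: field_simps)
          ultimately have "e' * (1 - ?q^k) - sG * e' / ?nr \<le> e' * (real k - sG) / ?nr" by linarith
          also have "\<dots> \<le> ?nr * (real k - sG) / ?nr"
            using e'n sGk by (intro divide_right_mono mult_right_mono) auto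
          also have "\<dots> = real k - sG" by simp
          also have "\<dots> \<le> coll c H PG + (1 - ?q^k) * coll c H P'"
            using loss C'0 q0 by (simp add: power_le_one add_increasing2)
          finally show ?thesis .
        qed
        show "((?nr - real (card (tab_hash c H ` X))) - ?nr * ?q^card X - coll c H P) \<le>
            ?q^k * ((?nr - real (card (tab_hash c H ` X'))) - ?nr * ?q^card X' - coll c H P') + (Y2 H - (\<Sum>v<2^r. Y2 (updH H i a v)) / ?nr)"
          using key sf(3) unfolding EY collU
          by (simp add: Y2_def Yf_def e'_def cardX k_def power_add algebra_simps)
      qed
      also have "\<dots> \<le> exp (lam^2 * real k^2 / 8) * (real (card ?T) * exp ((lam * ?q^k)^2 * real (card X') powr ?b / 8))"
        using P'e[of "lam * ?q^k"] lam q0 by (intro mult_left_mono) (auto simp: mult.assoc)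
      also have "\<dots> \<le> exp (lam^2 * real k^2 / 8) * (real (card ?T) * exp (lam^2 * real (card X') powr ?b / 8))"
      proof -
        have "(?q^k)^2 \<le> 1" using q0 by (simp add: power_le_one)
        hence "lam^2 * (?q^k)^2 \<le> lam^2 * 1" by (intro mult_left_mono) auto
        hence "(lam * ?q^k)^2 \<le> lam^2" by (simp add: power_mult_distrib)
        hence "(lam * ?q^k)^2 * real (card X') powr ?b / 8 \<le> lam^2 * real (card X') powr ?b / 8"
          by (intro divide_right_mono mult_right_mono) auto
        thus ?thesis by (intro mult_left_mono) auto
      qed
      also have "\<dots> = real (card ?T) * exp (lam^2 * (real k^2 + real (card X') powr ?b) / 8)"
        by (simp add: exp_add[symmetric] algebra_simps add_divide_distrib)
      also have "\<dots> \<le> real (card ?T) * exp (lam^2 * real (card X) powr ?b / 8)"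
        using comb by (intro mult_left_mono) (auto intro!: divide_right_mono mult_left_mono)
      finally show "(\<Sum>H\<in>?T. exp (lam * ((?nr - real (card (tab_hash c H ` X))) - ?nr * ?q^card X - coll c H P)))
        \<le> real (card ?T) * exp (lam^2 * real (card X) powr ?b / 8)" .
    qed
    ultimately show ?thesis by blast
  qed
qed

lemma xor_eq0_iff: "xor (a::nat) b = 0 \<longleftrightarrow> a = b"
proof
  assume "xor a b = 0"
  hence "xor (xor a b) b = b" by simp
  thus "a = b" by (simp add: xor.assoc)
qed simp

lemma card_filter_sum: "finite A \<Longrightarrow> real (card {x\<in>A. P x}) = (\<Sum>x\<in>A. if P x then 1 else 0)"
  by (simp add: sum.If_cases Int_def)

lemma count_shift:
  fixes D :: "(nat \<Rightarrow> nat \<Rightarrow> nat) \<Rightarrow> nat" and Q :: "(nat \<Rightarrow> nat \<Rightarrow> nat) \<Rightarrow> bool"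
  assumes ia: "i < c" "a < s"
    and Dsh: "\<And>H u. H \<in> tab_space c s r \<Longrightarrow> u < 2^r \<Longrightarrow> D (updH H i a u) = xor (D (updH H i a 0)) u"
    and Dlt: "\<And>H. H \<in> tab_space c s r \<Longrightarrow> D H < 2^r"
    and Qinv: "\<And>H u. H \<in> tab_space c s r \<Longrightarrow> u < 2^r \<Longrightarrow> Q (updH H i a u) = Q H"
  shows "real (card {H\<in>tab_space c s r. D H = 0 \<and> Q H}) * 2^r = real (card {H\<in>tab_space c s r. Q H})"
proof -
  let ?T = "tab_space c s r"
  have "real (card {H\<in>?T. D H = 0 \<and> Q H}) * 2^r = (\<Sum>H\<in>?T. if D H = 0 \<and> Q H then 1 else 0) * 2^r"
    by (simp add: card_filter_sum[OF tab_space_finite])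
  also have "\<dots> = (\<Sum>H\<in>?T. \<Sum>u<2^r. if D (updH H i a u) = 0 \<and> Q (updH H i a u) then 1 else 0)"
    by (rule sum_split_upd[OF ia])
  also have "\<dots> = (\<Sum>H\<in>?T. if Q H then 1 else 0)"
  proof (rule sum.cong)
    fix H assume H: "H \<in> ?T"
    define d where "d = D (updH H i a 0)"
    have d: "d < 2^r" unfolding d_def by (rule Dlt[OF updH_in[OF H ia]]) simp
    have "(\<Sum>u<(2::nat)^r. if D (updH H i a u) = 0 \<and> Q (updH H i a u) then 1 else (0::real)) =
          (\<Sum>u<(2::nat)^r. if u = d \<and> Q H then 1 else 0)"
    proof (rule sum.cong)
      fix u assume u: "u \<in> {..<(2::nat)^r}"
      have "D (updH H i a u) = xor d u" unfolding d_def using Dsh[OF H] u by blast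
      moreover have "Q (updH H i a u) = Q H" using Qinv[OF H] u by blast
      ultimately show "(if D (updH H i a u) = 0 \<and> Q (updH H i a u) then 1 else (0::real)) =
          (if u = d \<and> Q H then 1 else 0)"
        by (auto simp: xor_eq0_iff)
    qed simp
    also have "\<dots> = (if Q H then 1 else 0)"
      using d by (cases "Q H") (auto simp: sum.delta)
    finally show "(\<Sum>u<(2::nat)^r. if D (updH H i a u) = 0 \<and> Q (updH H i a u) then 1 else (0::real)) = (if Q H then 1 else 0)" .
  qed simp
  also have "\<dots> = real (card {H\<in>?T. Q H})"
    by (simp add: card_filter_sum[OF tab_space_finite])
  finally show ?thesis .
qed

definition hd2 :: "nat \<Rightarrow> (nat \<Rightarrow> nat \<Rightarrow> nat) \<Rightarrow> (nat \<Rightarrow> nat) \<Rightarrow> (nat \<Rightarrow> nat) \<Rightarrow> nat" where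
  "hd2 c H x y = xor (tab_hash c H x) (tab_hash c H y)"

lemma hd2_lt: "H \<in> tab_space c s r \<Longrightarrow> x \<in> keys c s \<Longrightarrow> y \<in> keys c s \<Longrightarrow> hd2 c H x y < 2^r"
  unfolding hd2_def by (intro xor_lt_pow tab_hash_lt)

lemma hd2_shift:
  assumes "i < c" "(x i = a) \<noteq> (y i = a)"
  shows "hd2 c (updH H i a u) x y = xor (hd2 c (updH H i a 0) x y) u"
proof (cases "x i = a")
  case True
  hence "y i \<noteq> a" using assms by auto
  have 1: "tab_hash c (updH H i a u) x = xor (tab_hash c (updH H i a 0) x) u"
    by (rule tab_hash_upd_same) (use True assms in auto)
  have 2: "tab_hash c (updH H i a v) y = tab_hash c H y" for v
    by (rule tab_hash_upd_other) (use \<open>y i \<noteq> a\<close> in auto)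
  show ?thesis unfolding hd2_def 1 2 by (simp only: xor.assoc xor.commute xor.left_commute)
next
  case False
  hence "y i = a" using assms by auto
  have 1: "tab_hash c (updH H i a u) y = xor (tab_hash c (updH H i a 0) y) u"
    by (rule tab_hash_upd_same) (use \<open>y i = a\<close> assms in auto)
  have 2: "tab_hash c (updH H i a v) x = tab_hash c H x" for v
    by (rule tab_hash_upd_other) (use False in auto)
  show ?thesis unfolding hd2_def 1 2 by (simp only: xor.assoc xor.commute xor.left_commute)
qed

lemma hd2_inv:
  assumes "(x i = a) = (y i = a)"
  shows "hd2 c (updH H i a u) x y = hd2 c (updH H i a 0) x y"
proof (cases "i < c \<and> x i = a")
  case True
  have 1: "tab_hash c (updH H i a u) x = xor (tab_hash c (updH H i a 0) x) u"
    by (rule tab_hash_upd_same) (use True in auto)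
  have 2: "tab_hash c (updH H i a u) y = xor (tab_hash c (updH H i a 0) y) u"
    by (rule tab_hash_upd_same) (use True assms in auto)
  have "xor (xor A u) (xor B u) = xor A B" for A B :: nat
    by (simp add: xor.assoc xor.left_commute[of u])
  thus ?thesis unfolding hd2_def 1 2 by simp
next
  case False
  have 1: "tab_hash c (updH H i a v) x = tab_hash c H x" for v
    by (rule tab_hash_upd_other) (use False in auto)
  have 2: "tab_hash c (updH H i a v) y = tab_hash c H y" for v
    by (rule tab_hash_upd_other) (use False assms in auto)
  show ?thesis unfolding hd2_def 1 2 ..
qed

lemma hash_eq_hd2: "(tab_hash c H x = tab_hash c H y) = (hd2 c H x y = 0)"
  by (simp add: hd2_def xor_eq0_iff)

lemma prob_pair:
  assumes "x \<in> keys c s" "y \<in> keys c s" and ia: "i < c" "a < s" and ne: "(x i = a) \<noteq> (y i = a)"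
    and Qinv: "\<And>H u. H \<in> tab_space c s r \<Longrightarrow> u < 2^r \<Longrightarrow> Q (updH H i a u) = Q H"
  shows "real (card {H\<in>tab_space c s r. tab_hash c H x = tab_hash c H y \<and> Q H}) * 2^r
         = real (card {H\<in>tab_space c s r. Q H})"
proof -
  have "real (card {H\<in>tab_space c s r. hd2 c H x y = 0 \<and> Q H}) * 2^r = real (card {H\<in>tab_space c s r. Q H})"
  proof (rule count_shift[OF ia])
    fix H and u :: nat assume H: "H \<in> tab_space c s r" and u: "u < 2^r"
    show "hd2 c (updH H i a u) x y = xor (hd2 c (updH H i a 0) x y) u" by (rule hd2_shift) (use ia ne in auto)
    show "Q (updH H i a u) = Q H" by (rule Qinv[OF H u])
  next
    fix H assume "H \<in> tab_space c s r" thus "hd2 c H x y < 2^r" using hd2_lt assms by blast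
  qed
  thus ?thesis by (simp add: hash_eq_hd2)
qed

lemma prob_one:
  assumes "x \<in> keys c s" "y \<in> keys c s" "x \<noteq> y"
  shows "real (card {H\<in>tab_space c s r. tab_hash c H x = tab_hash c H y}) * 2^r = real (card (tab_space c s r))"
proof -
  have "\<exists>i<c. x i \<noteq> y i"
  proof (rule ccontr)
    assume "\<not> (\<exists>i<c. x i \<noteq> y i)"
    hence "x = y" using assms(1,2) unfolding keys_def by (intro PiE_ext[of x "{..<c}" "\<lambda>_. {..<s}" y]) auto
    thus False using assms(3) by simp
  qed
  then obtain i where i: "i < c" "x i \<noteq> y i" by blast
  have ia: "x i < s" using assms i unfolding keys_def by (auto simp: PiE_iff)
  have ne: "(x i = x i) \<noteq> (y i = x i)" using i by simp
  have "real (card {H\<in>tab_space c s r. tab_hash c H x = tab_hash c H y \<and> True}) * 2^r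
         = real (card {H\<in>tab_space c s r. True})"
    by (rule prob_pair[OF assms(1,2) i(1) ia ne]) (rule refl)
  thus ?thesis by simp
qed

lemma hash_eq_inv:
  assumes H: "H \<in> tab_space c s r" and zw: "(z i = a) = (w i = a)"
  shows "(tab_hash c (updH H i a u) z = tab_hash c (updH H i a u) w) = (tab_hash c H z = tab_hash c H w)"
proof -
  have "hd2 c (updH H i a u) z w = hd2 c (updH H i a 0) z w" by (rule hd2_inv) (rule zw)
  moreover have "hd2 c (updH H i a (H i a)) z w = hd2 c (updH H i a 0) z w" by (rule hd2_inv) (rule zw)
  hence "hd2 c H z w = hd2 c (updH H i a 0) z w" by (simp add: updH_self[OF H])
  ultimately show ?thesis by (simp add: hash_eq_hd2)
qed

definition pairs_up :: "nat \<Rightarrow> nat \<Rightarrow> nat \<Rightarrow> nat \<Rightarrow> bool" where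
  "pairs_up p q v w \<longleftrightarrow> (p = q \<and> v = w) \<or> (p = v \<and> q = w) \<or> (p = w \<and> q = v)"

definition dep :: "nat \<Rightarrow> (nat \<Rightarrow> nat) \<Rightarrow> (nat \<Rightarrow> nat) \<Rightarrow> (nat \<Rightarrow> nat) \<Rightarrow> (nat \<Rightarrow> nat) \<Rightarrow> bool" where
  "dep c x y z w \<longleftrightarrow> (\<forall>i<c. pairs_up (x i) (y i) (z i) (w i))"

lemma odd_char:
  assumes "\<not> pairs_up p q v w"
  shows "\<exists>a\<in>{p,q,v,w}. ((p = a) \<noteq> (q = a) \<and> (v = a) = (w = a)) \<or> ((v = a) \<noteq> (w = a) \<and> (p = a) = (q = a))"
proof (cases "p = q")
  case True
  hence "v \<noteq> w" using assms by (auto simp: pairs_up_def)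
  thus ?thesis using True by auto
next
  case False
  show ?thesis
  proof (cases "(v = p) = (w = p)")
    case True thus ?thesis using False by auto
  next
    case F2: False
    show ?thesis
    proof (cases "(v = q) = (w = q)")
      case True thus ?thesis using False by auto
    next
      case False
      hence "pairs_up p q v w" using F2 \<open>p \<noteq> q\<close> unfolding pairs_up_def by auto
      thus ?thesis using assms by simp
    qed
  qed
qed

lemma prob_two:
  assumes "x \<in> keys c s" "y \<in> keys c s" "x \<noteq> y" "z \<in> keys c s" "w \<in> keys c s" "z \<noteq> w"
    and nd: "\<not> dep c x y z w"
  shows "real (card {H\<in>tab_space c s r. tab_hash c H x = tab_hash c H y \<and> tab_hash c H z = tab_hash c H w}) * 2^r * 2^r
         = real (card (tab_space c s r))"
proof -
  obtain i where i: "i < c" "\<not> pairs_up (x i) (y i) (z i) (w i)" using nd unfolding dep_def by blast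
  have ks: "x i < s" "y i < s" "z i < s" "w i < s"
    using assms i unfolding keys_def by (auto simp: PiE_iff)
  obtain a where a: "a < s" "((x i = a) \<noteq> (y i = a) \<and> (z i = a) = (w i = a)) \<or>
                              ((z i = a) \<noteq> (w i = a) \<and> (x i = a) = (y i = a))"
    using odd_char[OF i(2)] ks by blast
  let ?T = "tab_space c s r"
  show ?thesis
  proof (cases "(x i = a) \<noteq> (y i = a) \<and> (z i = a) = (w i = a)")
    case True
    have "real (card {H\<in>?T. tab_hash c H x = tab_hash c H y \<and> tab_hash c H z = tab_hash c H w}) * 2^r
          = real (card {H\<in>?T. tab_hash c H z = tab_hash c H w})"
    proof (rule prob_pair[OF assms(1,2) i(1) a(1)])
      show "(x i = a) \<noteq> (y i = a)" using True by blast
      fix H and u :: nat assume "H \<in> ?T" "u < 2^r"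
      thus "(tab_hash c (updH H i a u) z = tab_hash c (updH H i a u) w) = (tab_hash c H z = tab_hash c H w)"
        by (intro hash_eq_inv) (use True in auto)
    qed
    then show ?thesis using prob_one[OF assms(4-6), of r] by simp
  next
    case False
    hence F: "(z i = a) \<noteq> (w i = a)" "(x i = a) = (y i = a)" using a by auto
    have "real (card {H\<in>?T. tab_hash c H z = tab_hash c H w \<and> tab_hash c H x = tab_hash c H y}) * 2^r
          = real (card {H\<in>?T. tab_hash c H x = tab_hash c H y})"
    proof (rule prob_pair[OF assms(4,5) i(1) a(1)])
      show "(z i = a) \<noteq> (w i = a)" using F by blast
      fix H and u :: nat assume "H \<in> ?T" "u < 2^r"
      thus "(tab_hash c (updH H i a u) x = tab_hash c (updH H i a u) y) = (tab_hash c H x = tab_hash c H y)"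
        by (intro hash_eq_inv) (use F in auto)
    qed
    moreover have "{H\<in>?T. tab_hash c H z = tab_hash c H w \<and> tab_hash c H x = tab_hash c H y} =
                   {H\<in>?T. tab_hash c H x = tab_hash c H y \<and> tab_hash c H z = tab_hash c H w}" by auto
    ultimately show ?thesis using prob_one[OF assms(1-3), of r] by simp
  qed
qed

lemma var_aux:
  fixes A B D T p N :: real
  assumes "N > 0" "A \<le> D * (T / N) + p^2 * T / N^2" "B = p * T / N"
  shows "A - 2 * (p / N) * B + T * (p / N)^2 \<le> D * (T / N)"
proof -
  have "2 * (p / N) * B = 2 * (p^2 * T / N^2)" using assms(3) by (simp add: power2_eq_square)
  moreover have "T * (p / N)^2 = p^2 * T / N^2" by (simp add: power_divide)
  ultimately show ?thesis using assms(2) by linarith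
qed

definition Ind :: "nat \<Rightarrow> (nat \<Rightarrow> nat \<Rightarrow> nat) \<Rightarrow> ((nat \<Rightarrow> nat) \<times> (nat \<Rightarrow> nat)) \<Rightarrow> real" where
  "Ind c H p = (if tab_hash c H (fst p) = tab_hash c H (snd p) then 1 else 0)"

lemma var_coll:
  assumes P: "P \<subseteq> {(x, y)\<in>X \<times> X. x \<noteq> y}" and X: "X \<subseteq> keys c s" "finite X"
  shows "(\<Sum>H\<in>tab_space c s r. (coll c H P - real (card P) / 2^r)^2)
         \<le> real (card (tab_space c s r)) * real (card {(p, p')\<in>P \<times> P. dep c (fst p) (snd p) (fst p') (snd p')}) / 2^r"
proof -
  let ?T = "tab_space c s r"
  let ?N = "(2::real)^r"
  let ?TT = "real (card ?T)"
  let ?dep = "\<lambda>p p'. dep c (fst p) (snd p) (fst p') (snd p')"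
  have finP: "finite P" by (rule finite_subset[of _ "X \<times> X"]) (use P X in auto)
  have finT: "finite ?T" by (rule tab_space_finite)
  have pk: "fst p \<in> keys c s" "snd p \<in> keys c s" "fst p \<noteq> snd p" if "p \<in> P" for p
  proof -
    obtain x y where xy: "p = (x, y)" by (cases p)
    thus "fst p \<in> keys c s" "snd p \<in> keys c s" "fst p \<noteq> snd p" using that P X by auto
  qed
  have collI: "coll c H P = (\<Sum>p\<in>P. Ind c H p)" for H
    unfolding coll_def Ind_def by (rule card_filter_sum[OF finP])
  have s1: "(\<Sum>H\<in>?T. Ind c H p) = ?TT / ?N" if "p \<in> P" for p
  proof -
    have "(\<Sum>H\<in>?T. Ind c H p) = real (card {H\<in>?T. tab_hash c H (fst p) = tab_hash c H (snd p)})"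
      unfolding Ind_def by (rule card_filter_sum[OF finT, symmetric])
    also have "\<dots> = ?TT / ?N" using prob_one[OF pk[OF that], of r] by (simp add: field_simps)
    finally show ?thesis .
  qed
  have s2: "(\<Sum>H\<in>?T. Ind c H p * Ind c H p') \<le> (if ?dep p p' then ?TT / ?N else ?TT / ?N^2)"
    if "p \<in> P" "p' \<in> P" for p p'
  proof -
    have "(\<Sum>H\<in>?T. Ind c H p * Ind c H p') = real (card {H\<in>?T. tab_hash c H (fst p) = tab_hash c H (snd p) \<and>
                  tab_hash c H (fst p') = tab_hash c H (snd p')})"
      unfolding Ind_def by (subst card_filter_sum[OF finT]) (auto intro: sum.cong)
    also have "\<dots> \<le> (if ?dep p p' then ?TT / ?N else ?TT / ?N^2)"
    proof (cases "?dep p p'")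
      case True
      have "card {H\<in>?T. tab_hash c H (fst p) = tab_hash c H (snd p) \<and> tab_hash c H (fst p') = tab_hash c H (snd p')}
          \<le> card {H\<in>?T. tab_hash c H (fst p) = tab_hash c H (snd p)}"
        by (rule card_mono) (use finT in auto)
      hence "real (card {H\<in>?T. tab_hash c H (fst p) = tab_hash c H (snd p) \<and> tab_hash c H (fst p') = tab_hash c H (snd p')})
          \<le> real (card {H\<in>?T. tab_hash c H (fst p) = tab_hash c H (snd p)})" by simp
      also have "\<dots> = ?TT / ?N" using prob_one[OF pk[OF that(1)], of r] by (simp add: field_simps)
      finally show ?thesis using True by simp
    next
      case False
      have "real (card {H\<in>?T. tab_hash c H (fst p) = tab_hash c H (snd p) \<and> tab_hash c H (fst p') = tab_hash c H (snd p')}) * ?N * ?N = ?TT"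
        by (rule prob_two[OF pk[OF that(1)] pk[OF that(2)] False])
      thus ?thesis using False by (simp add: field_simps power2_eq_square)
    qed
    finally show ?thesis .
  qed
  have "(\<Sum>H\<in>?T. (coll c H P)^2) = (\<Sum>H\<in>?T. \<Sum>p\<in>P. \<Sum>p'\<in>P. Ind c H p * Ind c H p')"
    by (simp add: collI power2_eq_square sum_product)
  also have "\<dots> = (\<Sum>p\<in>P. \<Sum>p'\<in>P. \<Sum>H\<in>?T. Ind c H p * Ind c H p')"
    by (simp add: sum.swap[of _ ?T] sum.swap[of _ ?T P])
  also have "\<dots> \<le> (\<Sum>p\<in>P. \<Sum>p'\<in>P. (if ?dep p p' then ?TT / ?N else 0) + ?TT / ?N^2)"
  proof (intro sum_mono)
    fix p p' assume "p \<in> P" "p' \<in> P"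
    thus "(\<Sum>H\<in>?T. Ind c H p * Ind c H p') \<le> (if ?dep p p' then ?TT / ?N else 0) + ?TT / ?N^2"
      using s2[of p p'] by (cases "?dep p p'") (auto intro: order_trans)
  qed
  also have "\<dots> = (\<Sum>pp\<in>P \<times> P. if ?dep (fst pp) (snd pp) then ?TT / ?N else 0) + real (card P)^2 * ?TT / ?N^2"
    by (simp add: sum.distrib sum.cartesian_product case_prod_beta power2_eq_square)
  also have "(\<Sum>pp\<in>P \<times> P. if ?dep (fst pp) (snd pp) then ?TT / ?N else 0) =
             real (card {(p, p')\<in>P \<times> P. ?dep p p'}) * (?TT / ?N)"
  proof -
    have "(\<Sum>pp\<in>P \<times> P. if ?dep (fst pp) (snd pp) then ?TT / ?N else 0) =
          (\<Sum>pp\<in>P \<times> P. (if ?dep (fst pp) (snd pp) then 1 else 0) * (?TT / ?N))"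
      by (intro sum.cong) auto
    also have "\<dots> = (\<Sum>pp\<in>P \<times> P. if ?dep (fst pp) (snd pp) then 1 else 0) * (?TT / ?N)"
      by (rule sum_distrib_right[symmetric])
    also have "(\<Sum>pp\<in>P \<times> P. if ?dep (fst pp) (snd pp) then 1 else (0::real)) = real (card {pp\<in>P \<times> P. ?dep (fst pp) (snd pp)})"
      by (rule card_filter_sum[symmetric]) (use finP in simp)
    also have "{pp\<in>P \<times> P. ?dep (fst pp) (snd pp)} = {(p, p')\<in>P \<times> P. ?dep p p'}" by auto
    finally show ?thesis .
  qed
  finally have sq: "(\<Sum>H\<in>?T. (coll c H P)^2) \<le> real (card {(p, p')\<in>P \<times> P. ?dep p p'}) * (?TT / ?N) + real (card P)^2 * ?TT / ?N^2" .
  have lin: "(\<Sum>H\<in>?T. coll c H P) = real (card P) * ?TT / ?N"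
  proof -
    have "(\<Sum>H\<in>?T. coll c H P) = (\<Sum>p\<in>P. \<Sum>H\<in>?T. Ind c H p)" by (simp add: collI sum.swap[of _ ?T])
    also have "\<dots> = (\<Sum>p\<in>P. ?TT / ?N)" by (rule sum.cong) (auto simp: s1)
    finally show ?thesis by simp
  qed
  have "(\<Sum>H\<in>?T. (coll c H P - real (card P) / ?N)^2) =
        (\<Sum>H\<in>?T. (coll c H P)^2) - 2 * (real (card P) / ?N) * (\<Sum>H\<in>?T. coll c H P) + ?TT * (real (card P) / ?N)^2"
    by (simp add: power2_diff sum.distrib sum_subtractf sum_distrib_left sum_divide_distrib algebra_simps)
  also have "\<dots> \<le> real (card {(p, p')\<in>P \<times> P. ?dep p p'}) * (?TT / ?N)"
    by (rule var_aux[OF _ sq lin]) simp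
  finally show ?thesis by (simp add: mult.commute)
qed

definition QJ :: "nat set \<Rightarrow> (nat \<Rightarrow> nat) set \<Rightarrow> (nat \<Rightarrow> nat) set \<Rightarrow> (nat \<Rightarrow> nat) set \<Rightarrow> (nat \<Rightarrow> nat) set \<Rightarrow>
   ((nat \<Rightarrow> nat) \<times> (nat \<Rightarrow> nat) \<times> (nat \<Rightarrow> nat) \<times> (nat \<Rightarrow> nat)) set" where
  "QJ J X1 X2 X3 X4 = {(x, y, z, w). x \<in> X1 \<and> y \<in> X2 \<and> z \<in> X3 \<and> w \<in> X4 \<and> (\<forall>i\<in>J. pairs_up (x i) (y i) (z i) (w i))}"

lemma QJ_finite: "finite X1 \<Longrightarrow> finite X2 \<Longrightarrow> finite X3 \<Longrightarrow> finite X4 \<Longrightarrow> finite (QJ J X1 X2 X3 X4)"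
  by (rule finite_subset[of _ "X1 \<times> X2 \<times> X3 \<times> X4"]) (auto simp: QJ_def)

lemma pairs_up_sym1: "pairs_up p q v w = pairs_up p v q w"
  and pairs_up_sym2: "pairs_up p q v w = pairs_up p w v q"
  unfolding pairs_up_def by auto

lemma cs_sqrt:
  fixes a b :: "'a \<Rightarrow> real"
  assumes "finite A" "\<And>x. x \<in> A \<Longrightarrow> a x \<ge> 0" "\<And>x. x \<in> A \<Longrightarrow> b x \<ge> 0"
  shows "(\<Sum>x\<in>A. sqrt (a x * b x)) \<le> sqrt (sum a A) * sqrt (sum b A)"
proof -
  have "(\<Sum>x\<in>A. sqrt (a x) * sqrt (b x))^2 \<le> (\<Sum>x\<in>A. (sqrt (a x))^2) * (\<Sum>x\<in>A. (sqrt (b x))^2)"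
    by (rule Cauchy_Schwarz_ineq_sum)
  also have "\<dots> = sum a A * sum b A" using assms by (simp cong: sum.cong)
  finally have "(\<Sum>x\<in>A. sqrt (a x) * sqrt (b x)) \<le> sqrt (sum a A * sum b A)" by (rule real_le_rsqrt)
  thus ?thesis by (simp add: real_sqrt_mult)
qed

lemma part_sum:
  assumes "finite X" "finite A"
  shows "(\<Sum>\<alpha>\<in>A. real (card {x\<in>X. f x = \<alpha>})) \<le> real (card X)"
proof -
  have "card (\<Union>\<alpha>\<in>A. {x\<in>X. f x = \<alpha>}) = (\<Sum>\<alpha>\<in>A. card {x\<in>X. f x = \<alpha>})"
    by (rule card_UN_disjoint) (use assms in auto)
  moreover have "card (\<Union>\<alpha>\<in>A. {x\<in>X. f x = \<alpha>}) \<le> card X" by (rule card_mono) (use assms in auto)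
  ultimately show ?thesis by (metis of_nat_le_iff of_nat_sum)
qed

lemma inj_restrict_split:
  assumes "inj_on (\<lambda>x. restrict x (insert j J)) X"
  shows "inj_on (\<lambda>x. restrict x J) {x\<in>X. x j = \<alpha>}"
proof (rule inj_onI)
  fix x y assume xy: "x \<in> {x\<in>X. x j = \<alpha>}" "y \<in> {x\<in>X. x j = \<alpha>}" "restrict x J = restrict y J"
  have eqJ: "x i = y i" if "i \<in> J" for i using fun_cong[OF xy(3), of i] that by simp
  have "restrict x (insert j J) = restrict y (insert j J)"
  proof
    fix i show "restrict x (insert j J) i = restrict y (insert j J) i"
      using xy eqJ by (cases "i = j") (auto simp: restrict_def)
  qed
  thus "x = y" using assms xy by (auto dest: inj_onD)
qed

lemma quad_count:
  assumes "finite J"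
  shows "finite X1 \<Longrightarrow> finite X2 \<Longrightarrow> finite X3 \<Longrightarrow> finite X4 \<Longrightarrow>
    inj_on (\<lambda>x. restrict x J) X1 \<Longrightarrow> inj_on (\<lambda>x. restrict x J) X2 \<Longrightarrow>
    inj_on (\<lambda>x. restrict x J) X3 \<Longrightarrow> inj_on (\<lambda>x. restrict x J) X4 \<Longrightarrow>
    real (card (QJ J X1 X2 X3 X4)) \<le> 3 ^ card J * sqrt (real (card X1) * real (card X2) * real (card X3) * real (card X4))"
  using assms
proof (induction J arbitrary: X1 X2 X3 X4 rule: finite_induct)
  case empty
  have le1: "card X \<le> 1" if "inj_on (\<lambda>x. restrict x {}) X" for X :: "(nat \<Rightarrow> nat) set"
  proof -
    have "\<forall>x\<in>X. \<forall>y\<in>X. x = y"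
    proof (intro ballI)
      fix x y assume "x \<in> X" "y \<in> X"
      moreover have "restrict x {} = restrict y {}" by (simp add: restrict_def)
      ultimately show "x = y" using inj_onD[OF that] by blast
    qed
    thus ?thesis using card_le_Suc0_iff_eq[of X] by (cases "finite X") auto
  qed
  have c: "card X1 \<le> 1" "card X2 \<le> 1" "card X3 \<le> 1" "card X4 \<le> 1" using empty.prems le1 by blast+
  have "card (QJ {} X1 X2 X3 X4) \<le> card (X1 \<times> X2 \<times> X3 \<times> X4)"
    by (rule card_mono) (use empty in \<open>auto simp: QJ_def\<close>)
  also have "\<dots> = card X1 * card X2 * card X3 * card X4" by (simp add: card_cartesian_product)
  finally have le: "card (QJ {} X1 X2 X3 X4) \<le> card X1 * card X2 * card X3 * card X4" .
  have "card X1 * card X2 * card X3 * card X4 = 0 \<or> card X1 * card X2 * card X3 * card X4 = 1"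
    using c by (auto simp: le_Suc_eq)
  thus ?case using le by (auto simp flip: of_nat_mult)
next
  case (insert j J)
  let ?sq = "\<lambda>X1 X2 X3 X4. sqrt (real (card X1) * real (card X2) * real (card X3) * real (card X4))"
  let ?ok = "\<lambda>X. finite X \<and> inj_on (\<lambda>x. restrict x (insert j J)) X"
  let ?cond = "\<lambda>X1 X2 X3 X4. {(x, y, z, w)\<in>QJ J X1 X2 X3 X4. x j = y j \<and> z j = w j}"
  have Q1: "real (card (?cond X1 X2 X3 X4)) \<le> 3 ^ card J * ?sq X1 X2 X3 X4"
    if ok: "?ok X1" "?ok X2" "?ok X3" "?ok X4" for X1 X2 X3 X4
  proof -
    define A1 where "A1 = (\<lambda>x. x j) ` X1"
    define A3 where "A3 = (\<lambda>x. x j) ` X3"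
    define S where "S X \<alpha> = {x\<in>X. x j = \<alpha>}" for X :: "(nat \<Rightarrow> nat) set" and \<alpha>
    have finA: "finite A1" "finite A3" using ok by (auto simp: A1_def A3_def)
    have okS: "finite (S X \<alpha>) \<and> inj_on (\<lambda>x. restrict x J) (S X \<alpha>)" if "?ok X" for X \<alpha>
      using that inj_restrict_split[of j J X \<alpha>] by (auto simp: S_def)
    have IH: "real (card (QJ J (S X1 \<alpha>) (S X2 \<alpha>) (S X3 \<beta>) (S X4 \<beta>))) \<le>
          3 ^ card J * ?sq (S X1 \<alpha>) (S X2 \<alpha>) (S X3 \<beta>) (S X4 \<beta>)" for \<alpha> \<beta>
      using okS[OF ok(1), of \<alpha>] okS[OF ok(2), of \<alpha>] okS[OF ok(3), of \<beta>] okS[OF ok(4), of \<beta>]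
      by (intro insert.IH) blast+
    have sub: "?cond X1 X2 X3 X4 \<subseteq> (\<Union>\<alpha>\<in>A1. \<Union>\<beta>\<in>A3. QJ J (S X1 \<alpha>) (S X2 \<alpha>) (S X3 \<beta>) (S X4 \<beta>))"
    proof
      fix q assume q: "q \<in> ?cond X1 X2 X3 X4"
      obtain x y z w where qe: "q = (x, y, z, w)" by (cases q)
      have mem: "x \<in> X1" "y \<in> X2" "z \<in> X3" "w \<in> X4" and e: "x j = y j" "z j = w j"
        and pJ: "\<forall>i\<in>J. pairs_up (x i) (y i) (z i) (w i)" using q qe by (auto simp: QJ_def)
      show "q \<in> (\<Union>\<alpha>\<in>A1. \<Union>\<beta>\<in>A3. QJ J (S X1 \<alpha>) (S X2 \<alpha>) (S X3 \<beta>) (S X4 \<beta>))"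
      proof (rule UN_I[of "x j"])
        show "x j \<in> A1" using mem by (simp add: A1_def)
        show "q \<in> (\<Union>\<beta>\<in>A3. QJ J (S X1 (x j)) (S X2 (x j)) (S X3 \<beta>) (S X4 \<beta>))"
        proof (rule UN_I[of "z j"])
          show "z j \<in> A3" using mem by (simp add: A3_def)
          show "q \<in> QJ J (S X1 (x j)) (S X2 (x j)) (S X3 (z j)) (S X4 (z j))"
            using mem e pJ by (simp add: QJ_def S_def qe)
        qed
      qed
    qed
    have "card (?cond X1 X2 X3 X4) \<le> card (\<Union>\<alpha>\<in>A1. \<Union>\<beta>\<in>A3. QJ J (S X1 \<alpha>) (S X2 \<alpha>) (S X3 \<beta>) (S X4 \<beta>))"
      by (rule card_mono[OF _ sub]) (use finA okS ok QJ_finite in \<open>auto intro!: finite_UN_I\<close>)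
    also have "\<dots> \<le> (\<Sum>\<alpha>\<in>A1. card (\<Union>\<beta>\<in>A3. QJ J (S X1 \<alpha>) (S X2 \<alpha>) (S X3 \<beta>) (S X4 \<beta>)))"
      by (rule card_UN_le[OF finA(1)])
    also have "\<dots> \<le> (\<Sum>\<alpha>\<in>A1. \<Sum>\<beta>\<in>A3. card (QJ J (S X1 \<alpha>) (S X2 \<alpha>) (S X3 \<beta>) (S X4 \<beta>)))"
      by (intro sum_mono card_UN_le[OF finA(2)])
    finally have "real (card (?cond X1 X2 X3 X4)) \<le> real (\<Sum>\<alpha>\<in>A1. \<Sum>\<beta>\<in>A3. card (QJ J (S X1 \<alpha>) (S X2 \<alpha>) (S X3 \<beta>) (S X4 \<beta>)))"
      by (simp only: of_nat_le_iff)
    also have "\<dots> = (\<Sum>\<alpha>\<in>A1. \<Sum>\<beta>\<in>A3. real (card (QJ J (S X1 \<alpha>) (S X2 \<alpha>) (S X3 \<beta>) (S X4 \<beta>))))"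
      by simp
    also have "\<dots> \<le> (\<Sum>\<alpha>\<in>A1. \<Sum>\<beta>\<in>A3. 3 ^ card J * ?sq (S X1 \<alpha>) (S X2 \<alpha>) (S X3 \<beta>) (S X4 \<beta>))"
      by (intro sum_mono IH)
    also have "\<dots> = 3 ^ card J * ((\<Sum>\<alpha>\<in>A1. sqrt (real (card (S X1 \<alpha>)) * real (card (S X2 \<alpha>)))) *
                                   (\<Sum>\<beta>\<in>A3. sqrt (real (card (S X3 \<beta>)) * real (card (S X4 \<beta>)))))"
    proof -
      have e: "3 ^ card J * ?sq (S X1 \<alpha>) (S X2 \<alpha>) (S X3 \<beta>) (S X4 \<beta>) =
            3 ^ card J * (sqrt (real (card (S X1 \<alpha>)) * real (card (S X2 \<alpha>))) * sqrt (real (card (S X3 \<beta>)) * real (card (S X4 \<beta>))))" for \<alpha> \<beta>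
        by (simp add: real_sqrt_mult[symmetric] mult.assoc)
      define f where "f \<alpha> = sqrt (real (card (S X1 \<alpha>)) * real (card (S X2 \<alpha>)))" for \<alpha>
      define g where "g \<beta> = sqrt (real (card (S X3 \<beta>)) * real (card (S X4 \<beta>)))" for \<beta>
      have "(\<Sum>\<alpha>\<in>A1. f \<alpha>) * (\<Sum>\<beta>\<in>A3. g \<beta>) = (\<Sum>\<alpha>\<in>A1. \<Sum>\<beta>\<in>A3. f \<alpha> * g \<beta>)" by (rule sum_product)
      hence "3 ^ card J * ((\<Sum>\<alpha>\<in>A1. f \<alpha>) * (\<Sum>\<beta>\<in>A3. g \<beta>)) = (\<Sum>\<alpha>\<in>A1. \<Sum>\<beta>\<in>A3. 3 ^ card J * (f \<alpha> * g \<beta>))"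
        by (simp add: sum_distrib_left)
      thus ?thesis unfolding e f_def g_def by simp
    qed
    also have "\<dots> \<le> 3 ^ card J * ((sqrt (real (card X1)) * sqrt (real (card X2))) * (sqrt (real (card X3)) * sqrt (real (card X4))))"
    proof (intro mult_left_mono mult_mono)
      have "(\<Sum>\<alpha>\<in>A1. sqrt (real (card (S X1 \<alpha>)) * real (card (S X2 \<alpha>)))) \<le>
            sqrt (\<Sum>\<alpha>\<in>A1. real (card (S X1 \<alpha>))) * sqrt (\<Sum>\<alpha>\<in>A1. real (card (S X2 \<alpha>)))"
        by (rule cs_sqrt[OF finA(1)]) auto
      also have "\<dots> \<le> sqrt (real (card X1)) * sqrt (real (card X2))"
        unfolding S_def using part_sum ok finA
        by (intro mult_mono real_sqrt_le_mono) (auto intro: sum_nonneg)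
      finally show "(\<Sum>\<alpha>\<in>A1. sqrt (real (card (S X1 \<alpha>)) * real (card (S X2 \<alpha>)))) \<le> sqrt (real (card X1)) * sqrt (real (card X2))" .
      have "(\<Sum>\<beta>\<in>A3. sqrt (real (card (S X3 \<beta>)) * real (card (S X4 \<beta>)))) \<le>
            sqrt (\<Sum>\<beta>\<in>A3. real (card (S X3 \<beta>))) * sqrt (\<Sum>\<beta>\<in>A3. real (card (S X4 \<beta>)))"
        by (rule cs_sqrt[OF finA(2)]) auto
      also have "\<dots> \<le> sqrt (real (card X3)) * sqrt (real (card X4))"
        unfolding S_def using part_sum ok finA
        by (intro mult_mono real_sqrt_le_mono) (auto intro: sum_nonneg)
      finally show "(\<Sum>\<beta>\<in>A3. sqrt (real (card (S X3 \<beta>)) * real (card (S X4 \<beta>)))) \<le> sqrt (real (card X3)) * sqrt (real (card X4))" .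
    qed (auto intro: sum_nonneg)
    also have "\<dots> = 3 ^ card J * ?sq X1 X2 X3 X4" by (simp add: real_sqrt_mult mult_ac)
    finally show ?thesis .
  qed
  have ok: "?ok X1" "?ok X2" "?ok X3" "?ok X4" using insert.prems by blast+
  define f2 where "f2 = (\<lambda>(x::nat\<Rightarrow>nat, y::nat\<Rightarrow>nat, z::nat\<Rightarrow>nat, w::nat\<Rightarrow>nat). (x, z, y, w))"
  define f3 where "f3 = (\<lambda>(x::nat\<Rightarrow>nat, y::nat\<Rightarrow>nat, z::nat\<Rightarrow>nat, w::nat\<Rightarrow>nat). (x, w, z, y))"
  have sub: "QJ (insert j J) X1 X2 X3 X4 \<subseteq> ?cond X1 X2 X3 X4 \<union> f2 ` ?cond X1 X3 X2 X4 \<union> f3 ` ?cond X1 X4 X3 X2"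
  proof
    fix q assume q: "q \<in> QJ (insert j J) X1 X2 X3 X4"
    obtain x y z w where qe: "q = (x, y, z, w)" by (cases q)
    have mem: "x \<in> X1" "y \<in> X2" "z \<in> X3" "w \<in> X4" and pj: "pairs_up (x j) (y j) (z j) (w j)"
      and pJ: "\<forall>i\<in>J. pairs_up (x i) (y i) (z i) (w i)" using q qe by (auto simp: QJ_def)
    show "q \<in> ?cond X1 X2 X3 X4 \<union> f2 ` ?cond X1 X3 X2 X4 \<union> f3 ` ?cond X1 X4 X3 X2"
    proof (cases "x j = y j \<and> z j = w j")
      case True thus ?thesis using mem pJ qe by (auto simp: QJ_def)
    next
      case F1: False
      show ?thesis
      proof (cases "x j = z j \<and> y j = w j")
        case True
        have "(x, z, y, w) \<in> ?cond X1 X3 X2 X4" using True mem pJ by (auto simp: QJ_def pairs_up_sym1)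
        hence "q \<in> f2 ` ?cond X1 X3 X2 X4" unfolding qe by (intro image_eqI[where x="(x, z, y, w)"]) (simp_all add: f2_def)
        thus ?thesis by blast
      next
        case False
        hence T: "x j = w j \<and> y j = z j" using pj F1 unfolding pairs_up_def by auto
        have "(x, w, z, y) \<in> ?cond X1 X4 X3 X2" using T mem pJ by (auto simp: QJ_def pairs_up_sym2)
        hence "q \<in> f3 ` ?cond X1 X4 X3 X2" unfolding qe by (intro image_eqI[where x="(x, w, z, y)"]) (simp_all add: f3_def)
        thus ?thesis by blast
      qed
    qed
  qed
  have finc: "finite (?cond A B C D)" if "finite A" "finite B" "finite C" "finite D" for A B C D
    by (rule finite_subset[OF _ QJ_finite[OF that, of J]]) auto
  have fins: "finite (?cond X1 X2 X3 X4)" "finite (?cond X1 X3 X2 X4)" "finite (?cond X1 X4 X3 X2)"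
    using finc ok by auto
  have "card (QJ (insert j J) X1 X2 X3 X4) \<le> card (?cond X1 X2 X3 X4 \<union> f2 ` ?cond X1 X3 X2 X4 \<union> f3 ` ?cond X1 X4 X3 X2)"
    by (rule card_mono[OF _ sub]) (use fins in auto)
  also have "\<dots> \<le> card (?cond X1 X2 X3 X4) + card (f2 ` ?cond X1 X3 X2 X4) + card (f3 ` ?cond X1 X4 X3 X2)"
    by (rule order_trans[OF card_Un_le add_right_mono[OF card_Un_le]])
  also have "\<dots> \<le> card (?cond X1 X2 X3 X4) + card (?cond X1 X3 X2 X4) + card (?cond X1 X4 X3 X2)"
    by (intro add_mono card_image_le fins le_refl)
  finally have "real (card (QJ (insert j J) X1 X2 X3 X4)) \<le>
      real (card (?cond X1 X2 X3 X4)) + real (card (?cond X1 X3 X2 X4)) + real (card (?cond X1 X4 X3 X2))"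
    by (simp only: of_nat_add[symmetric] of_nat_le_iff)
  also have "\<dots> \<le> 3 ^ card J * ?sq X1 X2 X3 X4 + 3 ^ card J * ?sq X1 X3 X2 X4 + 3 ^ card J * ?sq X1 X4 X3 X2"
    by (intro add_mono Q1) (use ok in auto)
  also have "\<dots> = 3 ^ card (insert j J) * ?sq X1 X2 X3 X4"
    using insert.hyps by (simp add: mult_ac)
  finally show ?case .
qed

lemma keys_finite: "finite (keys c s)"
  unfolding keys_def by (intro finite_PiE) auto

lemma dep_count:
  assumes X: "X \<subseteq> keys c s" and P: "P \<subseteq> {(x, y)\<in>X \<times> X. x \<noteq> y}"
  shows "real (card {(p, p')\<in>P \<times> P. dep c (fst p) (snd p) (fst p') (snd p')}) \<le> 3 ^ c * real (card X)^2"
proof -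
  have finX: "finite X" using X keys_finite finite_subset by blast
  have finP: "finite P" by (rule finite_subset[of _ "X \<times> X"]) (use P finX in auto)
  have inj: "inj_on (\<lambda>x. restrict x {..<c}) X"
  proof (rule inj_onI)
    fix x y assume "x \<in> X" "y \<in> X" "restrict x {..<c} = restrict y {..<c}"
    moreover have "restrict x {..<c} = x" "restrict y {..<c} = y"
      using \<open>x \<in> X\<close> \<open>y \<in> X\<close> X unfolding keys_def by (auto simp: PiE_def extensional_restrict)
    ultimately show "x = y" by simp
  qed
  let ?f = "\<lambda>(p::(nat\<Rightarrow>nat)\<times>(nat\<Rightarrow>nat), p'::(nat\<Rightarrow>nat)\<times>(nat\<Rightarrow>nat)). (fst p, snd p, fst p', snd p')"
  have "card {(p, p')\<in>P \<times> P. dep c (fst p) (snd p) (fst p') (snd p')} =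
        card (?f ` {(p, p')\<in>P \<times> P. dep c (fst p) (snd p) (fst p') (snd p')})"
    by (rule card_image[symmetric]) (auto simp: inj_on_def prod_eq_iff)
  also have "\<dots> \<le> card (QJ {..<c} X X X X)"
  proof (rule card_mono)
    show "finite (QJ {..<c} X X X X)" by (rule QJ_finite) (use finX in auto)
    show "?f ` {(p, p')\<in>P \<times> P. dep c (fst p) (snd p) (fst p') (snd p')} \<subseteq> QJ {..<c} X X X X"
      using P by (auto simp: QJ_def dep_def)
  qed
  finally have "real (card {(p, p')\<in>P \<times> P. dep c (fst p) (snd p) (fst p') (snd p')}) \<le> real (card (QJ {..<c} X X X X))"
    by (simp only: of_nat_le_iff)
  also have "\<dots> \<le> 3 ^ card {..<c} * sqrt (real (card X) * real (card X) * real (card X) * real (card X))"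
    by (rule quad_count) (use finX inj in auto)
  also have "sqrt (real (card X) * real (card X) * real (card X) * real (card X)) = real (card X)^2"
  proof -
    have "real (card X) * real (card X) * real (card X) * real (card X) = (real (card X)^2)^2"
      by (simp add: power2_eq_square)
    thus ?thesis by (simp only: real_sqrt_abs2 real_sqrt_abs abs_power2 power2_eq_square[symmetric])
  qed
  finally show ?thesis by simp
qed

lemma chernoff_count:
  fixes Z :: "'a \<Rightarrow> real"
  assumes "finite T" "lam \<ge> 0"
  shows "real (card {H\<in>T. Z H \<ge> tau}) * exp (lam * tau) \<le> (\<Sum>H\<in>T. exp (lam * Z H))"
proof -
  have "real (card {H\<in>T. Z H \<ge> tau}) * exp (lam * tau) = (\<Sum>H\<in>{H\<in>T. Z H \<ge> tau}. exp (lam * tau))"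
    by simp
  also have "\<dots> \<le> (\<Sum>H\<in>{H\<in>T. Z H \<ge> tau}. exp (lam * Z H))"
    using assms by (intro sum_mono) (auto intro: mult_left_mono)
  also have "\<dots> \<le> (\<Sum>H\<in>T. exp (lam * Z H))"
    by (rule sum_mono2) (use assms in auto)
  finally show ?thesis .
qed

lemma cheb_count:
  fixes V :: "'a \<Rightarrow> real"
  assumes "finite T" "mu \<le> tau"
  shows "real (card {H\<in>T. V H \<ge> tau}) * (tau - mu)^2 \<le> (\<Sum>H\<in>T. (V H - mu)^2)"
proof -
  have "real (card {H\<in>T. V H \<ge> tau}) * (tau - mu)^2 = (\<Sum>H\<in>{H\<in>T. V H \<ge> tau}. (tau - mu)^2)"
    by simp
  also have "\<dots> \<le> (\<Sum>H\<in>{H\<in>T. V H \<ge> tau}. (V H - mu)^2)"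
    using assms by (intro sum_mono power_mono) auto
  also have "\<dots> \<le> (\<Sum>H\<in>T. (V H - mu)^2)"
    by (rule sum_mono2) (use assms in auto)
  finally show ?thesis .
qed

lemma exp_half: "(x::real) \<le> 1/2 \<Longrightarrow> 1 \<le> 2 * exp (- x)"
  using exp_ge_add_one_self[of "-x"] by linarith

lemma tab_prob_le1: "tab_prob c s r Q \<le> 1"
proof -
  have "card {H\<in>tab_space c s r. Q H} \<le> card (tab_space c s r)"
    by (rule card_mono[OF tab_space_finite]) auto
  moreover have "card (tab_space c s r) > 0" using tab_space_finite tab_space_ne by (simp add: card_gt_0_iff)
  ultimately show ?thesis unfolding tab_prob_def by simp
qed

lemma tab_prob_mono:
  assumes "\<And>H. H \<in> tab_space c s r \<Longrightarrow> Q H \<Longrightarrow> Q' H"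
  shows "tab_prob c s r Q \<le> tab_prob c s r Q'"
  unfolding tab_prob_def using assms
  by (intro divide_right_mono of_nat_mono card_mono) (auto intro: finite_subset[OF _ tab_space_finite])

lemma tab_prob_empty:
  assumes "\<And>H. H \<in> tab_space c s r \<Longrightarrow> \<not> Q H"
  shows "tab_prob c s r Q = 0"
proof -
  have e: "{H\<in>tab_space c s r. Q H} = {}" using assms by blast
  show ?thesis unfolding tab_prob_def e by simp
qed

lemma mu0_eq: "mu0 (2^r) m = 2^r - 2^r * (1 - 1 / 2^r)^m"
  by (simp add: mu0_def algebra_simps)

lemma upper_tail:
  assumes c: "c \<ge> 1" and X: "X \<subseteq> keys c s" and t: "t \<ge> 0"
  shows "tab_prob c s r (\<lambda>H. real (card (tab_hash c H ` X)) \<ge> mu0 (2^r) (card X) + 2 * t)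
         \<le> 2 * exp (- (t ^ 2) / (2 * real (card X) powr (2 - 1 / real c)))"
proof -
  let ?T = "tab_space c s r"
  let ?nr = "(2::real)^r"
  let ?q = "1 - 1 / (2::real)^r"
  define M where "M = real (card X) powr (2 - 1 / real c)"
  define E where "E = exp (- (t ^ 2) / (2 * M))"
  have finX: "finite X" using X keys_finite finite_subset by blast
  have nr1: "?nr \<ge> 1" by simp
  have q0: "0 \<le> ?q" "?q \<le> 1" using nr1 by (auto simp: field_simps)
  have qm: "0 \<le> ?q ^ card X" "?q ^ card X \<le> 1" using q0 by (auto simp: power_le_one)
  have mu: "mu0 (2^r) (card X) = ?nr - ?nr * ?q^card X" by (rule mu0_eq)
  have M0: "M \<ge> 0" by (simp add: M_def)
  have Tpos: "real (card ?T) > 0" using tab_space_finite tab_space_ne by (simp add: card_gt_0_iff)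
  let ?ev = "\<lambda>H. real (card (tab_hash c H ` X)) \<ge> mu0 (2^r) (card X) + 2 * t"
  show ?thesis unfolding E_def[symmetric] M_def[symmetric]
  proof (cases "2 * t > ?nr")
    case True
    have "tab_prob c s r ?ev = 0"
    proof (rule tab_prob_empty)
      fix H assume H: "H \<in> ?T"
      have "real (card (tab_hash c H ` X)) \<le> ?nr" using hash_img_card[OF H X] by (simp flip: of_nat_power)
      moreover have "mu0 (2^r) (card X) \<ge> 0" unfolding mu using qm nr1 by (simp add: mult_left_le)
      ultimately show "\<not> ?ev H" using True by linarith
    qed
    thus "tab_prob c s r ?ev \<le> 2 * E" by (simp add: E_def)
  next
    case False
    hence t2: "2 * t \<le> ?nr" by simp
    show "tab_prob c s r ?ev \<le> 2 * E"
    proof (cases "M = 0 \<or> t * ?nr < M")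
      case True
      have "t^2 / (2 * M) \<le> 1/2"
      proof (cases "M = 0")
        case True thus ?thesis by simp
      next
        case False
        hence Mp: "M > 0" using M0 by simp
        have "t * ?nr < M" using \<open>M = 0 \<or> t * ?nr < M\<close> False by simp
        hence "t * t * ?nr \<le> t * M" using t by (simp add: mult_left_mono mult.assoc)
        hence "t^2 \<le> t * M / ?nr" using nr1 by (simp add: field_simps power2_eq_square)
        also have "\<dots> \<le> (?nr / 2) * M / ?nr" using t2 M0 nr1 by (intro divide_right_mono mult_right_mono) auto
        also have "\<dots> = M / 2" using nr1 by simp
        finally show ?thesis using Mp by (simp add: field_simps)
      qed
      hence h: "1 \<le> 2 * exp (- (t^2 / (2 * M)))" by (rule exp_half)
      have "exp (- (t^2 / (2 * M))) = E" unfolding E_def by (simp only: minus_divide_left)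
      hence "1 \<le> 2 * E" using h by simp
      thus ?thesis using tab_prob_le1[of c s r ?ev] by linarith
    next
      case False
      hence Mp: "M > 0" and tM: "M \<le> t * ?nr" using M0 by auto
      obtain P where P0: "0 \<le> P" and P1: "P \<le> ?q^card X"
        and Pb: "?nr * (?q^card X - P) \<le> M / ?nr"
        and Pe: "\<And>lam. lam \<ge> 0 \<Longrightarrow> (\<Sum>H\<in>?T. exp (lam * (?nr * P - (?nr - real (card (tab_hash c H ` X))))))
          \<le> real (card ?T) * exp (lam^2 * M / 8)"
        using upper_ind[OF c finX X, of r] unfolding M_def by blast
      have bias: "M / ?nr \<le> t" using tM nr1 by (simp add: field_simps)
      define Z where "Z H = ?nr * P - (?nr - real (card (tab_hash c H ` X)))" for H
      define lam where "lam = 4 * t / M"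
      have lam0: "lam \<ge> 0" using t Mp by (simp add: lam_def)
      have "tab_prob c s r ?ev \<le> tab_prob c s r (\<lambda>H. Z H \<ge> t)"
      proof (rule tab_prob_mono)
        fix H assume "?ev H"
        thus "Z H \<ge> t" unfolding Z_def mu using Pb bias by (simp add: algebra_simps)
      qed
      also have "\<dots> \<le> exp (- 2 * t^2 / M)"
      proof -
        have "real (card {H\<in>?T. Z H \<ge> t}) * exp (lam * t) \<le> (\<Sum>H\<in>?T. exp (lam * Z H))"
          by (rule chernoff_count[OF tab_space_finite lam0])
        also have "\<dots> \<le> real (card ?T) * exp (lam^2 * M / 8)" unfolding Z_def by (rule Pe[OF lam0])
        finally have "real (card {H\<in>?T. Z H \<ge> t}) / real (card ?T) \<le> exp (lam^2 * M / 8) / exp (lam * t)"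
          using Tpos by (simp add: field_simps)
        also have "\<dots> = exp (lam^2 * M / 8 - lam * t)" by (simp add: exp_diff)
        also have "lam^2 * M / 8 - lam * t = - 2 * t^2 / M"
          using Mp by (simp add: lam_def power2_eq_square field_simps)
        finally show ?thesis unfolding tab_prob_def .
      qed
      also have "\<dots> \<le> E" unfolding E_def using Mp t
        by (intro exp_mono) (simp add: field_simps)
      also have "\<dots> \<le> 2 * E" by (simp add: E_def)
      finally show ?thesis .
    qed
  qed
qed

lemma tab_prob_union:
  assumes "\<And>H. H \<in> tab_space c s r \<Longrightarrow> Q H \<Longrightarrow> A H \<or> B H"
  shows "tab_prob c s r Q \<le> tab_prob c s r A + tab_prob c s r B"
proof -
  let ?T = "tab_space c s r"
  have "card {H\<in>?T. Q H} \<le> card ({H\<in>?T. A H} \<union> {H\<in>?T. B H})"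
    by (rule card_mono) (use assms tab_space_finite in auto)
  also have "\<dots> \<le> card {H\<in>?T. A H} + card {H\<in>?T. B H}" by (rule card_Un_le)
  finally have "real (card {H\<in>?T. Q H}) \<le> real (card {H\<in>?T. A H}) + real (card {H\<in>?T. B H})"
    by (simp only: of_nat_add[symmetric] of_nat_le_iff)
  thus ?thesis unfolding tab_prob_def add_divide_distrib[symmetric] by (rule divide_right_mono) simp
qed

lemma lower_tail:
  assumes c: "c \<ge> 1" and X: "X \<subseteq> keys c s" and t: "t \<ge> 0"
  shows "tab_prob c s r (\<lambda>H. real (card (tab_hash c H ` X)) \<le> mu0 (2^r) (card X) - 2 * t)
         \<le> 2 * exp (- (t ^ 2) / (2 * real (card X) powr (2 - 1 / real c)))
           + 4 * 3 ^ c * (real (card X) ^ 2 / (2^r * t ^ 2))"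
proof -
  let ?T = "tab_space c s r"
  let ?nr = "(2::real)^r"
  let ?q = "1 - 1 / (2::real)^r"
  define M where "M = real (card X) powr (2 - 1 / real c)"
  define E where "E = exp (- (t ^ 2) / (2 * M))"
  define R where "R = 4 * 3 ^ c * (real (card X) ^ 2 / (2^r * t ^ 2))"
  have R0: "R \<ge> 0" by (simp add: R_def)
  have E0: "E \<ge> 0" by (simp add: E_def)
  have finX: "finite X" using X keys_finite finite_subset by blast
  have nr1: "?nr \<ge> 1" by simp
  have q0: "0 \<le> ?q" "?q \<le> 1" using nr1 by (auto simp: field_simps)
  have qm: "0 \<le> ?q ^ card X" "?q ^ card X \<le> 1" using q0 by (auto simp: power_le_one)
  have mu: "mu0 (2^r) (card X) = ?nr - ?nr * ?q^card X" by (rule mu0_eq)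
  have M0: "M \<ge> 0" by (simp add: M_def)
  have Tpos: "real (card ?T) > 0" using tab_space_finite tab_space_ne by (simp add: card_gt_0_iff)
  let ?ev = "\<lambda>H. real (card (tab_hash c H ` X)) \<le> mu0 (2^r) (card X) - 2 * t"
  show ?thesis unfolding E_def[symmetric] M_def[symmetric] R_def[symmetric]
  proof (cases "2 * t > ?nr")
    case True
    have "tab_prob c s r ?ev = 0"
    proof (rule tab_prob_empty)
      fix H assume H: "H \<in> ?T"
      have "mu0 (2^r) (card X) \<le> ?nr" unfolding mu using qm nr1 by simp
      thus "\<not> ?ev H" using True by simp
    qed
    thus "tab_prob c s r ?ev \<le> 2 * E + R" using R0 E0 by simp
  next
    case False
    hence t2: "2 * t \<le> ?nr" by simp
    show "tab_prob c s r ?ev \<le> 2 * E + R"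
    proof (cases "M = 0 \<or> t * ?nr < 2 * M")
      case True
      have "t^2 / (2 * M) \<le> 1/2"
      proof (cases "M = 0")
        case True thus ?thesis by simp
      next
        case False
        hence Mp: "M > 0" using M0 by simp
        have "t * ?nr < 2 * M" using \<open>M = 0 \<or> t * ?nr < 2 * M\<close> False by simp
        hence "t * t * ?nr \<le> t * (2 * M)" using t by (simp add: mult_left_mono mult.assoc)
        hence "t^2 \<le> t * (2 * M) / ?nr" using nr1 by (simp add: field_simps power2_eq_square)
        also have "\<dots> \<le> (?nr / 2) * (2 * M) / ?nr" using t2 M0 nr1 by (intro divide_right_mono mult_right_mono) auto
        also have "\<dots> = M" using nr1 by simp
        finally show ?thesis using Mp by (simp add: field_simps)
      qed
      hence h: "1 \<le> 2 * exp (- (t^2 / (2 * M)))" by (rule exp_half)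
      have "exp (- (t^2 / (2 * M))) = E" unfolding E_def by (simp only: minus_divide_left)
      hence "1 \<le> 2 * E" using h by simp
      thus ?thesis using tab_prob_le1[of c s r ?ev] R0 by linarith
    next
      case False
      hence Mp: "M > 0" and tM: "2 * M \<le> t * ?nr" using M0 by auto
      have tp: "t > 0" using Mp tM t by (cases "t = 0") auto
      obtain P where Psub: "P \<subseteq> {(x, y)\<in>X \<times> X. x \<noteq> y}" and Pc: "real (card P) \<le> M"
        and Pe: "\<And>lam. lam \<ge> 0 \<Longrightarrow> (\<Sum>H\<in>?T. exp (lam * ((?nr - real (card (tab_hash c H ` X))) - ?nr * ?q^card X - coll c H P)))
          \<le> real (card ?T) * exp (lam^2 * M / 8)"
        using lower_ind[OF c finX X, of r] unfolding M_def by blast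
      define Z where "Z H = (?nr - real (card (tab_hash c H ` X))) - ?nr * ?q^card X - coll c H P" for H
      define lam where "lam = 4 * t / M"
      have lam0: "lam \<ge> 0" using t Mp by (simp add: lam_def)
      have "tab_prob c s r ?ev \<le> tab_prob c s r (\<lambda>H. Z H \<ge> t) + tab_prob c s r (\<lambda>H. coll c H P \<ge> t)"
      proof (rule tab_prob_union)
        fix H assume "?ev H"
        thus "Z H \<ge> t \<or> coll c H P \<ge> t" unfolding Z_def mu by auto
      qed
      also have "tab_prob c s r (\<lambda>H. Z H \<ge> t) \<le> E"
      proof -
        have "real (card {H\<in>?T. Z H \<ge> t}) * exp (lam * t) \<le> (\<Sum>H\<in>?T. exp (lam * Z H))"
          by (rule chernoff_count[OF tab_space_finite lam0])
        also have "\<dots> \<le> real (card ?T) * exp (lam^2 * M / 8)" unfolding Z_def by (rule Pe[OF lam0])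
        finally have "real (card {H\<in>?T. Z H \<ge> t}) / real (card ?T) \<le> exp (lam^2 * M / 8) / exp (lam * t)"
          using Tpos by (simp add: field_simps)
        also have "\<dots> = exp (lam^2 * M / 8 - lam * t)" by (simp add: exp_diff)
        also have "lam^2 * M / 8 - lam * t = - 2 * t^2 / M"
          using Mp by (simp add: lam_def power2_eq_square field_simps)
        also have "exp (- 2 * t^2 / M) \<le> E" unfolding E_def using Mp t
          by (intro exp_mono) (simp add: field_simps)
        finally show ?thesis unfolding tab_prob_def .
      qed
      also have "tab_prob c s r (\<lambda>H. coll c H P \<ge> t) \<le> R"
      proof -
        define mu where "mu = real (card P) / ?nr"
        have mu_le: "mu \<le> t / 2" using Pc tM nr1 by (simp add: mu_def field_simps)
        have "real (card {H\<in>?T. coll c H P \<ge> t}) * (t - mu)^2 \<le> (\<Sum>H\<in>?T. (coll c H P - mu)^2)"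
          by (rule cheb_count[OF tab_space_finite]) (use mu_le t in simp)
        also have "\<dots> \<le> real (card ?T) * real (card {(p, p')\<in>P \<times> P. dep c (fst p) (snd p) (fst p') (snd p')}) / ?nr"
          unfolding mu_def by (rule var_coll[OF Psub X finX])
        also have "\<dots> \<le> real (card ?T) * (3 ^ c * real (card X)^2) / ?nr"
          using dep_count[OF X Psub] by (intro divide_right_mono mult_left_mono) auto
        finally have A: "real (card {H\<in>?T. coll c H P \<ge> t}) * (t - mu)^2 \<le> real (card ?T) * (3 ^ c * real (card X)^2) / ?nr" .
        have B: "(t - mu)^2 \<ge> t^2 / 4"
        proof -
          have "t / 2 \<le> t - mu" using mu_le by simp
          hence "(t / 2)^2 \<le> (t - mu)^2" using t by (intro power_mono) auto
          thus ?thesis by (simp add: power_divide)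
        qed
        have "real (card {H\<in>?T. coll c H P \<ge> t}) * (t^2 / 4) \<le> real (card ?T) * (3 ^ c * real (card X)^2) / ?nr"
          using A B by (meson mult_left_mono of_nat_0_le_iff order_trans)
        hence "real (card {H\<in>?T. coll c H P \<ge> t}) / real (card ?T) \<le> (3 ^ c * real (card X)^2) / ?nr / (t^2 / 4)"
          using Tpos tp by (simp add: field_simps)
        also have "\<dots> = R" unfolding R_def using tp by (simp add: field_simps)
        finally show ?thesis unfolding tab_prob_def .
      qed
      finally show ?thesis using E0 by simp
    qed
  qed
qed

theorem theorem3:
  fixes c :: nat
  assumes "c \<ge> 1"
  shows "\<exists>C>0. \<forall>(s::nat) (r::nat) (X::(nat \<Rightarrow> nat) set) (t::real).
           X \<subseteq> keys c s \<and> t \<ge> 0 \<longrightarrow>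
           (let m = card X; n = (2::nat) ^ r;
                E = exp (- (t ^ 2) / (2 * real m powr (2 - 1 / real c))) in
              tab_prob c s r (\<lambda>H. real (card (tab_hash c H ` X)) \<ge> mu0 n m + 2 * t)
                \<le> C * E \<and>
              tab_prob c s r (\<lambda>H. real (card (tab_hash c H ` X)) \<le> mu0 n m - 2 * t)
                \<le> C * (E + real m ^ 2 / (real n * t ^ 2)))"
proof (rule exI[of _ "4 * 3 ^ c + 2"], intro conjI allI impI)
  have "(0::real) \<le> 3 ^ c" by simp
  thus "(0::real) < 4 * 3 ^ c + 2" by linarith
next
  fix s r :: nat and X :: "(nat \<Rightarrow> nat) set" and t :: real
  assume A: "X \<subseteq> keys c s \<and> t \<ge> 0"
  define E where "E = exp (- (t ^ 2) / (2 * real (card X) powr (2 - 1 / real c)))"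
  define R where "R = real (card X) ^ 2 / (2^r * t ^ 2)"
  have E0: "E \<ge> 0" and R0: "R \<ge> 0" by (simp_all add: E_def R_def)
  have U: "tab_prob c s r (\<lambda>H. real (card (tab_hash c H ` X)) \<ge> mu0 (2^r) (card X) + 2 * t) \<le> 2 * E"
    unfolding E_def using upper_tail[OF assms] A by blast
  have L: "tab_prob c s r (\<lambda>H. real (card (tab_hash c H ` X)) \<le> mu0 (2^r) (card X) - 2 * t) \<le> 2 * E + 4 * 3 ^ c * R"
    unfolding E_def R_def using lower_tail[OF assms] A by blast
  have C1: "2 * E \<le> (4 * 3 ^ c + 2) * E" using E0 by (simp add: mult_right_mono)
  have C2: "2 * E + 4 * 3 ^ c * R \<le> (4 * 3 ^ c + 2) * (E + R)"
    using E0 R0 by (simp add: algebra_simps)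
  have Rn: "real ((2::nat) ^ r) = 2 ^ r" by simp
  show "let m = card X; n = (2::nat) ^ r;
                E = exp (- (t ^ 2) / (2 * real m powr (2 - 1 / real c))) in
              tab_prob c s r (\<lambda>H. real (card (tab_hash c H ` X)) \<ge> mu0 n m + 2 * t)
                \<le> (4 * 3 ^ c + 2) * E \<and>
              tab_prob c s r (\<lambda>H. real (card (tab_hash c H ` X)) \<le> mu0 n m - 2 * t)
                \<le> (4 * 3 ^ c + 2) * (E + real m ^ 2 / (real n * t ^ 2))"
    unfolding Let_def Rn E_def[symmetric] R_def[symmetric] using U L C1 C2 by linarith
qed

end
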